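(* Let $\Delta>0$ and $p>0$. Suppose the times at which a web page changes form a time-homogeneous Poisson point process on $[0,\infty)$ with rate $\Delta$, and, independently, the page is accessed at times $0=t_0<t_1<t_2<\cdots$ where $\{t_k-t_{k-1}\}_{k\ge1}$ are i.i.d. exponential random variables with rate $p$. For $k\ge 1$ let $I_k=1$ if the page changed at least once in $(t_{k-1},t_k]$ and $I_k=0$ otherwise, and let $\hat I_k=\sum_{j=1}^k I_j$. Let $\{\alpha_k\}_{k\ge1}$ be a sequence of positive reals and define \[ x_k = \frac{p\,\hat I_k}{k+\alpha_k-\hat I_k},\qquad k\ge 1. \] Then: 1. If $\lim_{k\to\infty}\alpha_k/k=0$, then $\lim_{k\to\infty}x_k=\Delta$ almost surely. 2. If, in addition, $\lim_{k\to\infty}\log(k/\alpha_k)/k=0$, then \[ \mathbb{E}|x_k-\Delta| = O\left(\max\left\{k^{-1/2},\ \alpha_k/k\right\}\right). \]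
   Context: Here $\Delta$ is unknown (to be estimated) and $p$ is known; $x_k$ is called the LLN estimator. *)

theory Defs
  imports "HOL-Probability.Probability" "HOL-Library.Landau_Symbols"
begin

text \<open>The rate-Delta homogeneous Poisson point process of page changes is
represented by its i.i.d. Exp(Delta) inter-arrival times G 0, G 1, ...;
the n-th change (n = 0,1,...) occurs at time G 0 + ... + G n.
The access times are t_0 = 0 and t_k = A 0 + ... + A (k-1),
with A i i.i.d. Exp(p).\<close>

definition change_time :: "(nat \<Rightarrow> 'a \<Rightarrow> real) \<Rightarrow> nat \<Rightarrow> 'a \<Rightarrow> real" where
  "change_time G n \<omega> = (\<Sum>i\<le>n. G i \<omega>)"

definition access_time :: "(nat \<Rightarrow> 'a \<Rightarrow> real) \<Rightarrow> nat \<Rightarrow> 'a \<Rightarrow> real" where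
  "access_time A k \<omega> = (\<Sum>i<k. A i \<omega>)"

definition change_ind ::
  "(nat \<Rightarrow> 'a \<Rightarrow> real) \<Rightarrow> (nat \<Rightarrow> 'a \<Rightarrow> real) \<Rightarrow> nat \<Rightarrow> 'a \<Rightarrow> real" where
  "change_ind G A k \<omega> =
     (if \<exists>n. access_time A (k - 1) \<omega> < change_time G n \<omega> \<and> change_time G n \<omega> \<le> access_time A k \<omega>
      then 1 else 0)"

definition change_count ::
  "(nat \<Rightarrow> 'a \<Rightarrow> real) \<Rightarrow> (nat \<Rightarrow> 'a \<Rightarrow> real) \<Rightarrow> nat \<Rightarrow> 'a \<Rightarrow> real" where
  "change_count G A k \<omega> = (\<Sum>j=1..k. change_ind G A j \<omega>)"

definition lln_est ::
  "real \<Rightarrow> (nat \<Rightarrow> real) \<Rightarrow> (nat \<Rightarrow> 'a \<Rightarrow> real) \<Rightarrow> (nat \<Rightarrow> 'a \<Rightarrow> real) \<Rightarrow> nat \<Rightarrow> 'a \<Rightarrow> real" where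
  "lln_est p \<alpha> G A k \<omega> =
     p * change_count G A k \<omega> / (real k + \<alpha> k - change_count G A k \<omega>)"

end

theory Submission
  imports Defs
begin

lemma (in prob_space) indep_vars_reindex:
  assumes ind: "indep_vars M' X I" and inj: "inj_on f J" and sub: "f ` J \<subseteq> I"
  shows "indep_vars (\<lambda>j. M' (f j)) (\<lambda>j. X (f j)) J"
proof -
  have rv: "\<forall>i\<in>I. random_variable (M' i) (X i)"
   and ind': "indep_sets (\<lambda>i. { X i -` A \<inter> space M | A. A \<in> sets (M' i)}) I"
    using ind unfolding indep_vars_def2 by auto
  show ?thesis unfolding indep_vars_def2
  proof (intro conjI ballI)
    fix j assume "j \<in> J" then show "random_variable (M' (f j)) (X (f j))" using rv sub by auto
  next
    show "indep_sets (\<lambda>j. { X (f j) -` A \<inter> space M | A. A \<in> sets (M' (f j))}) J"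
    proof (rule indep_setsI)
      fix j assume "j \<in> J"
      then show "{ X (f j) -` A \<inter> space M | A. A \<in> sets (M' (f j))} \<subseteq> events"
        using ind' sub unfolding indep_sets_def by auto
    next
      fix B K assume K: "K \<noteq> {}" "K \<subseteq> J" "finite K"
        and B: "\<forall>j\<in>K. B j \<in> { X (f j) -` A \<inter> space M | A. A \<in> sets (M' (f j))}"
      define C where "C i = B (inv_into K f i)" for i
      have injK: "inj_on f K" using inj K by (meson inj_on_subset)
      have Cf: "C (f j) = B j" if "j \<in> K" for j
        using injK that by (simp add: C_def)
      have "prob (\<Inter>i\<in>f`K. C i) = (\<Prod>i\<in>f`K. prob (C i))"
        apply (rule indep_setsD[OF ind'])
        using K sub B Cf by auto
      moreover have "(\<Inter>i\<in>f`K. C i) = (\<Inter>j\<in>K. B j)" using Cf by auto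
      moreover have "(\<Prod>i\<in>f`K. prob (C i)) = (\<Prod>j\<in>K. prob (B j))"
        using prod.reindex[OF injK, of "\<lambda>i. prob (C i)"] Cf by (simp cong: prod.cong)
      ultimately show "prob (\<Inter>j\<in>K. B j) = (\<Prod>j\<in>K. prob (B j))" by simp
    qed
  qed
qed

lemma (in prob_space) prob_indep_fubini:
  assumes ind: "indep_var S X T Y"
    and R[measurable]: "Measurable.pred (S \<Otimes>\<^sub>M T) (\<lambda>z. R (fst z) (snd z))"
  shows "prob {\<omega>\<in>space M. R (X \<omega>) (Y \<omega>)} = (\<integral>x. prob {\<omega>\<in>space M. R x (Y \<omega>)} \<partial>distr M S X)"
proof -
  have rvX[measurable]: "X \<in> measurable M S" and rvY[measurable]: "Y \<in> measurable M T"
    using ind by (auto dest: indep_var_rv1 indep_var_rv2)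
  interpret PX: prob_space "distr M S X" by (rule prob_space_distr) simp
  interpret PY: prob_space "distr M T Y" by (rule prob_space_distr) simp
  interpret PXY: pair_prob_space "distr M S X" "distr M T Y" ..
  have eq: "distr M S X \<Otimes>\<^sub>M distr M T Y = distr M (S \<Otimes>\<^sub>M T) (\<lambda>x. (X x, Y x))"
    using ind by (simp add: indep_var_distribution_eq)
  let ?R = "{z\<in>space (S \<Otimes>\<^sub>M T). R (fst z) (snd z)}"
  have Rs: "?R \<in> sets (S \<Otimes>\<^sub>M T)" by measurable
  have inner: "emeasure (distr M T Y) (Pair x -` ?R) = ennreal (prob {\<omega>\<in>space M. R x (Y \<omega>)})"
    if x: "x \<in> space S" for x
  proof -
    have "Pair x -` ?R = {y \<in> space T. R x y}" using x by (auto simp: space_pair_measure)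
    moreover have "{y \<in> space T. R x y} \<in> sets T"
    proof -
      have "Measurable.pred T (\<lambda>y. R x y)"
        using measurable_Pair2[OF R x] by simp
      then show ?thesis by measurable
    qed
    ultimately show ?thesis
      apply (simp add: emeasure_distr emeasure_eq_measure vimage_def Int_def conj_commute)
      apply (rule arg_cong[where f=prob])
      using measurable_space[OF rvY] by auto
  qed
  have "ennreal (prob {\<omega>\<in>space M. R (X \<omega>) (Y \<omega>)}) = emeasure M ((\<lambda>x. (X x, Y x)) -` ?R \<inter> space M)"
    by (simp add: emeasure_eq_measure vimage_def Int_def conj_commute space_pair_measure measurable_space[OF rvX] measurable_space[OF rvY])
       (metis (no_types, lifting) Collect_cong measurable_space[OF rvX] measurable_space[OF rvY])
  also have "\<dots> = emeasure (distr M (S \<Otimes>\<^sub>M T) (\<lambda>x. (X x, Y x))) ?R"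
    by (rule emeasure_distr[symmetric]) (auto simp: Rs)
  also have "\<dots> = emeasure (distr M S X \<Otimes>\<^sub>M distr M T Y) ?R" by (simp add: eq)
  also have "\<dots> = (\<integral>\<^sup>+x. emeasure (distr M T Y) (Pair x -` ?R) \<partial>distr M S X)"
    by (rule PY.emeasure_pair_measure_alt) (simp add: Rs cong: sets_pair_measure_cong)
  also have "\<dots> = (\<integral>\<^sup>+x. ennreal (prob {\<omega>\<in>space M. R x (Y \<omega>)}) \<partial>distr M S X)"
    by (intro nn_integral_cong inner) simp
  also have "\<dots> = ennreal (\<integral>x. prob {\<omega>\<in>space M. R x (Y \<omega>)} \<partial>distr M S X)"
  proof (rule nn_integral_eq_integral)
    have Rs': "?R \<in> sets (S \<Otimes>\<^sub>M distr M T Y)"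
      using Rs by (simp cong: sets_pair_measure_cong)
    have m: "(\<lambda>x. enn2real (emeasure (distr M T Y) (Pair x -` ?R))) \<in> borel_measurable S"
      using PY.measurable_emeasure_Pair[OF Rs'] by measurable
    have "(\<lambda>x. prob {\<omega>\<in>space M. R x (Y \<omega>)}) \<in> borel_measurable S"
    proof (rule measurable_cong[THEN iffD1, OF _ m])
      fix w assume w: "w \<in> space S"
      show "enn2real (emeasure (distr M T Y) (Pair w -` ?R)) = prob {\<omega> \<in> space M. R w (Y \<omega>)}"
        by (subst inner[OF w]) simp
    qed
    then show "integrable (distr M S X) (\<lambda>x. prob {\<omega>\<in>space M. R x (Y \<omega>)})"
      by (intro PX.integrable_const_bound[where B=1]) auto
  qed simp
  finally show ?thesis by (simp add: ennreal_inj)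
qed

lemma (in prob_space) prob_Pair_measurable:
  assumes rvY[measurable]: "Y \<in> measurable M T"
    and R[measurable]: "Measurable.pred (S \<Otimes>\<^sub>M T) (\<lambda>z. R (fst z) (snd z))"
  shows "(\<lambda>x. prob {\<omega>\<in>space M. R x (Y \<omega>)}) \<in> borel_measurable S"
proof -
  interpret PY: prob_space "distr M T Y" by (rule prob_space_distr) simp
  let ?R = "{z\<in>space (S \<Otimes>\<^sub>M T). R (fst z) (snd z)}"
  have Rs: "?R \<in> sets (S \<Otimes>\<^sub>M T)" by measurable
  have inner: "emeasure (distr M T Y) (Pair x -` ?R) = ennreal (prob {\<omega>\<in>space M. R x (Y \<omega>)})"
    if x: "x \<in> space S" for x
  proof -
    have "Pair x -` ?R = {y \<in> space T. R x y}" using x by (auto simp: space_pair_measure)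
    moreover have "{y \<in> space T. R x y} \<in> sets T"
    proof -
      have "Measurable.pred T (\<lambda>y. R x y)"
        using measurable_Pair2[OF R x] by simp
      then show ?thesis by measurable
    qed
    ultimately show ?thesis
      apply (simp add: emeasure_distr emeasure_eq_measure vimage_def Int_def conj_commute)
      apply (rule arg_cong[where f=prob])
      using measurable_space[OF rvY] by auto
  qed
  have Rs': "?R \<in> sets (S \<Otimes>\<^sub>M distr M T Y)"
    using Rs by (simp cong: sets_pair_measure_cong)
  have m: "(\<lambda>x. enn2real (emeasure (distr M T Y) (Pair x -` ?R))) \<in> borel_measurable S"
    using PY.measurable_emeasure_Pair[OF Rs'] by measurable
  show ?thesis
  proof (rule measurable_cong[THEN iffD1, OF _ m])
    fix w assume w: "w \<in> space S"
    show "enn2real (emeasure (distr M T Y) (Pair w -` ?R)) = prob {\<omega> \<in> space M. R w (Y \<omega>)}"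
      by (subst inner[OF w]) simp
  qed
qed

lemma (in prob_space) prob_distributed_nn:
  assumes D: "distributed M lborel Y f" and P[measurable]: "Measurable.pred borel P"
  shows "ennreal (prob {\<omega>\<in>space M. P (Y \<omega>)}) = (\<integral>\<^sup>+y. f y * indicator {y. P y} y \<partial>lborel)"
proof -
  have Ys: "{y. P y} \<in> sets lborel" by simp
  have "{\<omega>\<in>space M. P (Y \<omega>)} = Y -` {y. P y} \<inter> space M" by auto
  then show ?thesis using distributed_emeasure[OF D Ys] by (simp add: emeasure_eq_measure)
qed

lemma (in prob_space) exp_memoryless_pred:
  assumes D: "distributed M lborel Y (exponential_density l)" and l: "l > 0" and c: "c \<ge> 0"
    and P[measurable]: "Measurable.pred borel P"
  shows "prob {\<omega>\<in>space M. c < Y \<omega> \<and> P (Y \<omega> - c)} = exp (-l*c) * prob {\<omega>\<in>space M. P (Y \<omega>)}"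
proof -
  let ?f = "exponential_density l"
  have "ennreal (prob {\<omega>\<in>space M. c < Y \<omega> \<and> P (Y \<omega> - c)})
      = (\<integral>\<^sup>+y. ennreal (?f y) * indicator {y. c < y \<and> P (y - c)} y \<partial>lborel)"
    by (rule prob_distributed_nn[OF D]) measurable
  also have "\<dots> = (\<integral>\<^sup>+r. ennreal (?f (c + 1 * r)) * indicator {y. c < y \<and> P (y - c)} (c + 1 * r) \<partial>lborel)"
    by (subst nn_integral_real_affine[where c=1 and t=c]) auto
  also have "\<dots> = (\<integral>\<^sup>+r. ennreal (exp (-l*c)) * (ennreal (?f r) * indicator {y. P y} r) \<partial>lborel)"
  proof (rule nn_integral_cong_AE)
    show "AE r in lborel. ennreal (?f (c + 1 * r)) * indicator {y. c < y \<and> P (y - c)} (c + 1 * r)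
           = ennreal (exp (-l*c)) * (ennreal (?f r) * indicator {y. P y} r)"
      using AE_lborel_singleton[of 0]
    proof eventually_elim
      case (elim r)
      show ?case
      proof (cases "r > 0")
        case True
        then have "?f (c + 1 * r) = exp (-l*c) * ?f r" using c
          by (simp add: exponential_density_def exp_add[symmetric] algebra_simps)
        then show ?thesis using True l
          by (simp add: indicator_def ennreal_mult exponential_density_nonneg)
      next
        case False
        then have "r < 0" using elim by auto
        then show ?thesis by (simp add: exponential_density_def indicator_def)
      qed
    qed
  qed
  also have "\<dots> = ennreal (exp (-l*c)) * (\<integral>\<^sup>+r. ennreal (?f r) * indicator {y. P y} r \<partial>lborel)"
    by (rule nn_integral_cmult) measurable
  also have "\<dots> = ennreal (exp (-l*c)) * ennreal (prob {\<omega>\<in>space M. P (Y \<omega>)})"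
    by (subst prob_distributed_nn[OF D]) auto
  also have "\<dots> = ennreal (exp (-l*c) * prob {\<omega>\<in>space M. P (Y \<omega>)})"
    by (simp add: ennreal_mult)
  finally show ?thesis by (simp add: ennreal_inj)
qed

lemma (in prob_space) indep_var_sym:
  assumes "indep_var S X T Y" shows "indep_var T Y S X"
proof -
  have "indep_vars (\<lambda>j. case_bool S T (Not j)) (\<lambda>j. case_bool X Y (Not j)) UNIV"
    using assms unfolding indep_var_def by (rule indep_vars_reindex) (auto simp: inj_def)
  moreover have "(\<lambda>j. case_bool S T (Not j)) = case_bool T S" "(\<lambda>j. case_bool X Y (Not j)) = case_bool Y X"
    by (auto simp: fun_eq_iff split: bool.split)
  ultimately show ?thesis unfolding indep_var_def by simp
qed

lemma (in prob_space) exp_memoryless_indep: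
  assumes D: "distributed M lborel (\<lambda>\<omega>. proj (V \<omega>)) (exponential_density l)" and l: "l > 0" and c: "c \<ge> 0"
    and ind: "indep_var T V T Z" and pm[measurable]: "proj \<in> borel_measurable T"
    and Q[measurable]: "Measurable.pred (borel \<Otimes>\<^sub>M T) (\<lambda>z. Q (fst z) (snd z))"
  shows "prob {\<omega>\<in>space M. c < proj (V \<omega>) \<and> Q (proj (V \<omega>) - c) (Z \<omega>)} = exp (-l*c) * prob {\<omega>\<in>space M. Q (proj (V \<omega>)) (Z \<omega>)}"
proof -
  have ind': "indep_var T Z T V" by (rule indep_var_sym[OF ind])
  have Zm[measurable]: "Z \<in> measurable M T" using ind by (auto dest: indep_var_rv2)
  have Qz: "Measurable.pred borel (\<lambda>y. Q y z)" if "z \<in> space T" for z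
    using measurable_Pair1[OF Q that] by simp
  have R1: "Measurable.pred (T \<Otimes>\<^sub>M T) (\<lambda>z. c < proj (snd z) \<and> Q (proj (snd z) - c) (fst z))"
  proof -
    have "(\<lambda>z. (proj (snd z) - c, fst z)) \<in> measurable (T \<Otimes>\<^sub>M T) (borel \<Otimes>\<^sub>M T)" by measurable
    from measurable_compose[OF this Q] have "Measurable.pred (T \<Otimes>\<^sub>M T) (\<lambda>z. Q (proj (snd z) - c) (fst z))" by simp
    then show ?thesis by measurable
  qed
  have R2: "Measurable.pred (T \<Otimes>\<^sub>M T) (\<lambda>z. Q (proj (snd z)) (fst z))"
  proof -
    have "(\<lambda>z. (proj (snd z), fst z)) \<in> measurable (T \<Otimes>\<^sub>M T) (borel \<Otimes>\<^sub>M T)" by measurable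
    from measurable_compose[OF this Q] show ?thesis by simp
  qed
  have "prob {\<omega>\<in>space M. c < proj (V \<omega>) \<and> Q (proj (V \<omega>) - c) (Z \<omega>)}
      = (\<integral>z. prob {\<omega>\<in>space M. c < proj (V \<omega>) \<and> Q (proj (V \<omega>) - c) z} \<partial>distr M T Z)"
    using prob_indep_fubini[OF ind', of "\<lambda>z v. c < proj v \<and> Q (proj v - c) z"] R1 by simp
  also have "\<dots> = (\<integral>z. exp (-l*c) * prob {\<omega>\<in>space M. Q (proj (V \<omega>)) z} \<partial>distr M T Z)"
  proof (rule Bochner_Integration.integral_cong[OF refl])
    fix z assume "z \<in> space (distr M T Z)"
    then have "z \<in> space T" by simp
    then show "prob {\<omega>\<in>space M. c < proj (V \<omega>) \<and> Q (proj (V \<omega>) - c) z} = exp (-l*c) * prob {\<omega>\<in>space M. Q (proj (V \<omega>)) z}"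
      by (intro exp_memoryless_pred[OF D l c] Qz)
  qed
  also have "\<dots> = exp (-l*c) * (\<integral>z. prob {\<omega>\<in>space M. Q (proj (V \<omega>)) z} \<partial>distr M T Z)"
    by simp
  also have "(\<integral>z. prob {\<omega>\<in>space M. Q (proj (V \<omega>)) z} \<partial>distr M T Z) = prob {\<omega>\<in>space M. Q (proj (V \<omega>)) (Z \<omega>)}"
    using prob_indep_fubini[OF ind', of "\<lambda>z v. Q (proj v) z"] R2 by simp
  finally show ?thesis .
qed

definition avoid :: "(real \<times> real) list \<Rightarrow> real \<Rightarrow> bool" where
  "avoid ivs x \<longleftrightarrow> (\<forall>ab\<in>set ivs. \<not> (fst ab < x \<and> x \<le> snd ab))"

fun valid :: "real \<Rightarrow> (real \<times> real) list \<Rightarrow> bool" where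
  "valid c [] = True"
| "valid c (ab # r) = (c \<le> fst ab \<and> fst ab \<le> snd ab \<and> valid (snd ab) r)"

definition ilen :: "(real \<times> real) list \<Rightarrow> real" where
  "ilen ivs = sum_list (map (\<lambda>ab. snd ab - fst ab) ivs)"

definition shiftl :: "real \<Rightarrow> (real \<times> real) list \<Rightarrow> (real \<times> real) list" where
  "shiftl d ivs = map (\<lambda>ab. (fst ab - d, snd ab - d)) ivs"

lemma avoid_shiftl: "avoid (shiftl d r) y \<longleftrightarrow> avoid r (d + y)"
  by (auto simp: avoid_def shiftl_def)

lemma ilen_shiftl[simp]: "ilen (shiftl d r) = ilen r"
  by (induction r) (auto simp: ilen_def shiftl_def)

lemma valid_mono: "valid c r \<Longrightarrow> c' \<le> c \<Longrightarrow> valid c' r"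
  by (cases r) auto

lemma valid_shiftl: "valid c r \<Longrightarrow> valid (c - d) (shiftl d r)"
  by (induction r arbitrary: c) (auto simp: shiftl_def)

lemma valid_below: "valid c r \<Longrightarrow> x \<le> c \<Longrightarrow> avoid r x"
proof (induction r arbitrary: c)
  case (Cons ab r)
  then have "avoid r x" by (cases ab) (auto intro: order_trans)
  then show ?case using Cons.prems by (cases ab) (auto simp: avoid_def)
qed (simp add: avoid_def)

lemma measurable_avoid[measurable]:
  assumes [measurable]: "f \<in> borel_measurable N"
  shows "Measurable.pred N (\<lambda>x. avoid r (f x))"
  unfolding avoid_def by measurable

locale iid_exp = prob_space +
  fixes l :: real and g :: "nat \<Rightarrow> 'a \<Rightarrow> real"
  assumes l_pos: "l > 0"
    and g_distr: "\<And>n. distributed M lborel (g n) (exponential_density l)"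
    and g_indep: "indep_vars (\<lambda>_. borel) g UNIV"
begin

lemma g_meas[measurable]: "g n \<in> borel_measurable M"
  using g_distr[of n] by (auto dest: distributed_measurable)

lemma shift: "iid_exp M l (\<lambda>i. g (n + i))"
proof unfold_locales
  show "0 < l" by (rule l_pos)
  show "distributed M lborel (g (n + i)) (exponential_density l)" for i by (rule g_distr)
  show "indep_vars (\<lambda>_. borel) (\<lambda>i. g (n + i)) UNIV"
    using indep_vars_reindex[OF g_indep, of "\<lambda>i. n + i" UNIV] by (simp add: inj_def)
qed

lemma split_indep:
  assumes "A \<inter> B = {}"
  shows "indep_var (PiM A (\<lambda>_. borel)) (\<lambda>\<omega>. restrict (\<lambda>i. g i \<omega>) A) (PiM B (\<lambda>_. borel)) (\<lambda>\<omega>. restrict (\<lambda>i. g i \<omega>) B)"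
  using indep_var_restrict[OF g_indep assms] by simp

end

lemma sum_split_nk: "(\<Sum>i\<le>n+k. f i) = (\<Sum>i<n. f i) + (\<Sum>i\<le>k. f (n+i::nat)::real)"
  by (induction k) (auto simp: lessThan_Suc_atMost[symmetric])

lemma sum_atMost_shift0: "(\<Sum>i\<le>k. f (n+i::nat)) = f n + (\<Sum>i<k. f (Suc n+i)::real)"
  by (induction k) auto

context iid_exp begin

lemma meas_psum_fin: "m \<in> {..<n::nat} \<Longrightarrow> (\<lambda>x. \<Sum>i\<in>{..m}. x i) \<in> borel_measurable (PiM {..<n} (\<lambda>_. borel::real measure))"
  by (intro borel_measurable_sum measurable_component_singleton) (auto intro: le_less_trans)

lemma meas_psum_fin2: "(\<lambda>x. \<Sum>i\<in>{..<n::nat}. x i) \<in> borel_measurable (PiM {..<n} (\<lambda>_. borel::real measure))"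
  by (intro borel_measurable_sum measurable_component_singleton) auto

lemma test_meas1: "Measurable.pred (PiM {..<n::nat} (\<lambda>_. borel)) (\<lambda>x. \<forall>m\<in>{..<n}. (\<Sum>i\<in>{..m}. x i) \<le> (a::real))"
proof (rule pred_intros_countable_bounded(3))
  fix m assume "m \<in> {..<n}"
  from meas_psum_fin[OF this] show "Measurable.pred (PiM {..<n} (\<lambda>_. borel)) (\<lambda>x. (\<Sum>i\<in>{..m}. x i) \<le> a)"
    by measurable
qed

lemma test_meas2: "(\<lambda>f. \<lambda>i. f (n+i::nat)) \<in> measurable (PiM {n..} (\<lambda>_. borel)) (PiM UNIV (\<lambda>_. borel::real measure))"
  by (rule measurable_PiM_single') (auto intro!: measurable_component_singleton)

lemma test_meas3: "Measurable.pred (borel \<Otimes>\<^sub>M PiM UNIV (\<lambda>_. borel)) (\<lambda>z. \<forall>k::nat. avoid r (b + fst z + (\<Sum>i<k. snd z i)))"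
proof -
  have [measurable]: "(\<lambda>z. \<Sum>i<k. snd z i) \<in> borel_measurable (borel \<Otimes>\<^sub>M PiM UNIV (\<lambda>_. borel::real measure))" for k :: nat
    by (intro borel_measurable_sum) measurable
  then show ?thesis by measurable
qed

lemma dec:
  fixes a b :: real and n :: nat
  assumes ab: "0 \<le> a" "a \<le> b"
    and H: "prob {\<omega>\<in>space M. \<forall>k. avoid (shiftl b r) (change_time (\<lambda>i. g (n+i)) k \<omega>)} = exp (-l * ilen r)"
  shows "prob {\<omega>\<in>space M. (\<forall>m<n. change_time g m \<omega> \<le> a) \<and> b < change_time g n \<omega> \<and> (\<forall>k. avoid r (change_time g (n+k) \<omega>))}
       = exp (-l*(b-a)) * exp (-l * ilen r) * expectation (\<lambda>\<omega>. if \<forall>m<n. change_time g m \<omega> \<le> a then exp (-l*(a - (\<Sum>i<n. g i \<omega>))) else 0)"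
proof -
  define X where "X \<omega> = restrict (\<lambda>i. g i \<omega>) {..<n}" for \<omega>
  define W where "W \<omega> = (\<lambda>i. g (n+i) \<omega>)" for \<omega>
  define Z where "Z \<omega> = (\<lambda>i. g (Suc n+i) \<omega>)" for \<omega>
  let ?PX = "PiM {..<n} (\<lambda>_. borel::real measure)"
  let ?PU = "PiM UNIV (\<lambda>_. borel::real measure)"
  have indXW: "indep_var ?PX X ?PU W"
  proof -
    have sp: "indep_var ?PX (\<lambda>\<omega>. restrict (\<lambda>i. g i \<omega>) {..<n}) (PiM {n..} (\<lambda>_. borel)) (\<lambda>\<omega>. restrict (\<lambda>i. g i \<omega>) {n..})"
      by (rule split_indep) auto
    have "indep_var ?PX (id \<circ> (\<lambda>\<omega>. restrict (\<lambda>i. g i \<omega>) {..<n})) ?PU ((\<lambda>f. \<lambda>i. f (n+i)) \<circ> (\<lambda>\<omega>. restrict (\<lambda>i. g i \<omega>) {n..}))"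
      by (rule indep_var_compose[OF sp measurable_ident test_meas2])
    moreover have "(id \<circ> (\<lambda>\<omega>. restrict (\<lambda>i. g i \<omega>) {..<n})) = X" "((\<lambda>f. \<lambda>i. f (n+i)) \<circ> (\<lambda>\<omega>. restrict (\<lambda>i. g i \<omega>) {n..})) = W"
      by (auto simp: X_def W_def fun_eq_iff)
    ultimately show ?thesis by simp
  qed
  define V where "V \<omega> = (\<lambda>i::nat. g n \<omega>)" for \<omega>
  have indYZ: "indep_var ?PU V ?PU Z"
  proof -
    have sp: "indep_var (PiM {n} (\<lambda>_. borel)) (\<lambda>\<omega>. restrict (\<lambda>i. g i \<omega>) {n}) (PiM {Suc n..} (\<lambda>_. borel)) (\<lambda>\<omega>. restrict (\<lambda>i. g i \<omega>) {Suc n..})"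
      by (rule split_indep) auto
    have m1: "(\<lambda>f. \<lambda>i::nat. f n) \<in> measurable (PiM {n} (\<lambda>_. borel)) ?PU"
      by (rule measurable_PiM_single') (auto intro!: measurable_component_singleton)
    have "indep_var ?PU ((\<lambda>f. \<lambda>i::nat. f n) \<circ> (\<lambda>\<omega>. restrict (\<lambda>i. g i \<omega>) {n})) ?PU ((\<lambda>f. \<lambda>i. f (Suc n+i)) \<circ> (\<lambda>\<omega>. restrict (\<lambda>i. g i \<omega>) {Suc n..}))"
      by (rule indep_var_compose[OF sp m1 test_meas2])
    moreover have "((\<lambda>f. \<lambda>i::nat. f n) \<circ> (\<lambda>\<omega>. restrict (\<lambda>i. g i \<omega>) {n})) = V" "((\<lambda>f. \<lambda>i. f (Suc n+i)) \<circ> (\<lambda>\<omega>. restrict (\<lambda>i. g i \<omega>) {Suc n..})) = Z"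
      by (auto simp: Z_def V_def fun_eq_iff)
    ultimately show ?thesis by simp
  qed
  have V0: "(\<lambda>\<omega>. (\<lambda>f. f 0) (V \<omega>)) = g n" by (simp add: V_def fun_eq_iff)
  have DV: "distributed M lborel (\<lambda>\<omega>. (\<lambda>f. f 0) (V \<omega>)) (exponential_density l)"
    unfolding V0 by (rule g_distr)
  have pm: "(\<lambda>f. f 0) \<in> borel_measurable ?PU" by measurable
  have Xm[measurable]: "X \<in> measurable M ?PX" using indXW by (auto dest: indep_var_rv1)
  define past where "past x \<longleftrightarrow> (\<forall>m\<in>{..<n}. (\<Sum>i\<in>{..m}. x i) \<le> a)" for x :: "nat \<Rightarrow> real"
  define sx where "sx x = (\<Sum>i\<in>{..<n}. x i)" for x :: "nat \<Rightarrow> real"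
  define R where "R x w \<longleftrightarrow> past x \<and> b < sx x + w 0 \<and> (\<forall>k. avoid r (sx x + (\<Sum>i\<in>{..k}. w i)))" for x w :: "nat \<Rightarrow> real"
  have sxX: "sx (X \<omega>) = (\<Sum>i<n. g i \<omega>)" for \<omega>
    by (auto simp: sx_def X_def intro!: sum.cong)
  have pastX: "past (X \<omega>) \<longleftrightarrow> (\<forall>m<n. change_time g m \<omega> \<le> a)" for \<omega>
  proof -
    have "(\<Sum>i\<in>{..m}. X \<omega> i) = change_time g m \<omega>" if "m < n" for m
      using that by (auto simp: X_def change_time_def intro!: sum.cong)
    then show ?thesis by (auto simp: past_def)
  qed
  have ctn: "change_time g (n+k) \<omega> = sx (X \<omega>) + (\<Sum>i\<in>{..k}. W \<omega> i)" for k \<omega>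
    by (simp add: change_time_def sum_split_nk sxX W_def)
  have ev: "{\<omega>\<in>space M. (\<forall>m<n. change_time g m \<omega> \<le> a) \<and> b < change_time g n \<omega> \<and> (\<forall>k. avoid r (change_time g (n+k) \<omega>))}
      = {\<omega>\<in>space M. R (X \<omega>) (W \<omega>)}"
    using ctn[of 0] ctn by (auto simp: R_def pastX W_def)
  have pastm[measurable]: "Measurable.pred ?PX past"
    unfolding past_def[abs_def] by (rule test_meas1)
  have sxm[measurable]: "sx \<in> borel_measurable ?PX"
    unfolding sx_def[abs_def] by (rule meas_psum_fin2)
  have Rm: "Measurable.pred (?PX \<Otimes>\<^sub>M ?PU) (\<lambda>z. R (fst z) (snd z))"
  proof -
    have [measurable]: "(\<lambda>z. \<Sum>i\<in>{..k}. snd z i) \<in> borel_measurable (?PX \<Otimes>\<^sub>M ?PU)" for k :: nat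
      by (intro borel_measurable_sum) measurable
    show ?thesis unfolding R_def by measurable
  qed
  have "prob {\<omega>\<in>space M. R (X \<omega>) (W \<omega>)} = (\<integral>x. prob {\<omega>\<in>space M. R x (W \<omega>)} \<partial>distr M ?PX X)"
    by (rule prob_indep_fubini[OF indXW Rm])
  also have "\<dots> = (\<integral>x. (if past x then exp (-l*(b - sx x)) * exp (-l * ilen r) else 0) \<partial>distr M ?PX X)"
  proof (rule Bochner_Integration.integral_cong[OF refl])
    fix x assume "x \<in> space (distr M ?PX X)"
    show "prob {\<omega>\<in>space M. R x (W \<omega>)} = (if past x then exp (-l*(b - sx x)) * exp (-l * ilen r) else 0)"
    proof (cases "past x")
      case False
      then show ?thesis by (simp add: R_def)
    next
      case True
      have sxa: "sx x \<le> a"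
      proof (cases n)
        case 0 then show ?thesis using ab by (simp add: sx_def)
      next
        case (Suc n')
        then have "(\<Sum>i\<in>{..n'}. x i) \<le> a" using True by (auto simp: past_def)
        moreover have "{..n'} = {..<n}" using Suc by auto
        ultimately show ?thesis by (simp add: sx_def)
      qed
      define c where "c = b - sx x"
      have c: "c \<ge> 0" using sxa ab by (simp add: c_def)
      define Q where "Q y z \<longleftrightarrow> (\<forall>k::nat. avoid r (b + y + (\<Sum>i<k. z i)))" for y :: real and z :: "nat \<Rightarrow> real"
      have Qm: "Measurable.pred (borel \<Otimes>\<^sub>M ?PU) (\<lambda>z. Q (fst z) (snd z))"
        unfolding Q_def by (rule test_meas3)
      have e1: "{\<omega>\<in>space M. R x (W \<omega>)} = {\<omega>\<in>space M. c < g n \<omega> \<and> Q (g n \<omega> - c) (Z \<omega>)}"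
      proof -
        have "(\<Sum>i\<in>{..k}. W \<omega> i) = g n \<omega> + (\<Sum>i<k. Z \<omega> i)" for k \<omega>
          unfolding W_def Z_def by (rule sum_atMost_shift0)
        then show ?thesis using True by (auto simp: R_def Q_def c_def W_def algebra_simps)
      qed
      have e2: "{\<omega>\<in>space M. Q (g n \<omega>) (Z \<omega>)} = {\<omega>\<in>space M. \<forall>k. avoid (shiftl b r) (change_time (\<lambda>i. g (n+i)) k \<omega>)}"
      proof -
        have "change_time (\<lambda>i. g (n+i)) k \<omega> = g n \<omega> + (\<Sum>i<k. Z \<omega> i)" for k \<omega>
          unfolding change_time_def Z_def by (rule sum_atMost_shift0)
        then show ?thesis by (auto simp: Q_def avoid_shiftl add.assoc)
      qed
      have "prob {\<omega>\<in>space M. R x (W \<omega>)} = exp (-l*c) * prob {\<omega>\<in>space M. Q (g n \<omega>) (Z \<omega>)}"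
        using exp_memoryless_indep[OF DV l_pos c indYZ pm Qm] unfolding e1 by (simp add: V_def)
      also have "\<dots> = exp (-l*(b - sx x)) * exp (-l * ilen r)"
        unfolding e2 H c_def ..
      finally show ?thesis using True by simp
    qed
  qed
  also have "\<dots> = (\<integral>\<omega>. (if past (X \<omega>) then exp (-l*(b - sx (X \<omega>))) * exp (-l * ilen r) else 0) \<partial>M)"
    by (rule integral_distr) (auto)
  also have "\<dots> = (\<integral>\<omega>. exp (-l*(b-a)) * exp (-l * ilen r) * (if \<forall>m<n. change_time g m \<omega> \<le> a then exp (-l*(a - (\<Sum>i<n. g i \<omega>))) else 0) \<partial>M)"
  proof (rule Bochner_Integration.integral_cong[OF refl])
    fix \<omega>
    have "exp (-l*(b - sx (X \<omega>))) = exp (-l*(b-a)) * exp (-l*(a - (\<Sum>i<n. g i \<omega>)))"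
      by (simp add: sxX exp_add[symmetric] algebra_simps)
    then show "(if past (X \<omega>) then exp (-l*(b - sx (X \<omega>))) * exp (-l * ilen r) else 0)
      = exp (-l*(b-a)) * exp (-l * ilen r) * (if \<forall>m<n. change_time g m \<omega> \<le> a then exp (-l*(a - (\<Sum>i<n. g i \<omega>))) else 0)"
      by (simp add: pastX)
  qed
  also have "\<dots> = exp (-l*(b-a)) * exp (-l * ilen r) * expectation (\<lambda>\<omega>. if \<forall>m<n. change_time g m \<omega> \<le> a then exp (-l*(a - (\<Sum>i<n. g i \<omega>))) else 0)"
    by (rule integral_mult_right_zero)
  finally show ?thesis unfolding ev .
qed

end

context iid_exp begin

lemma g_pos_AE: "AE \<omega> in M. \<forall>i. 0 < g i \<omega>"
proof (subst AE_all_countable, intro allI)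
  fix i
  have "prob {\<omega>\<in>space M. g i \<omega> \<le> 0} = 0"
    using exponential_distributedD_le[OF g_distr[of i] order.refl l_pos] by simp
  then have "AE \<omega> in M. \<omega> \<notin> {\<omega>\<in>space M. g i \<omega> \<le> 0}"
    by (subst prob_eq_0[symmetric]) auto
  then show "AE \<omega> in M. 0 < g i \<omega>" using AE_space by eventually_elim auto
qed

lemma escape:
  assumes a: "0 \<le> a" shows "prob {\<omega>\<in>space M. \<forall>m. change_time g m \<omega> \<le> a} = 0"
proof -
  let ?A = "{\<omega>\<in>space M. \<forall>m. change_time g m \<omega> \<le> a}"
  define q where "q = 1 - exp (-a*l)"
  have q: "0 \<le> q" "q < 1" using a l_pos by (auto simp: q_def)
  have bound: "prob ?A \<le> q^(Suc m)" for m
  proof -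
    have "prob ?A \<le> prob {\<omega>\<in>space M. \<forall>i\<le>m. g i \<omega> \<le> a}"
    proof (rule finite_measure_mono_AE)
      show "AE x in M. x \<in> ?A \<longrightarrow> x \<in> {\<omega>\<in>space M. \<forall>i\<le>m. g i \<omega> \<le> a}"
        using g_pos_AE
      proof eventually_elim
        case (elim \<omega>)
        { fix i assume "\<omega> \<in> ?A"
          then have "change_time g i \<omega> \<le> a" by auto
          moreover have "g i \<omega> \<le> change_time g i \<omega>" unfolding change_time_def
            using elim by (intro member_le_sum) (auto intro: less_imp_le)
          ultimately have "g i \<omega> \<le> a" by simp }
        then show ?case by auto
      qed
      show "{\<omega>\<in>space M. \<forall>i\<le>m. g i \<omega> \<le> a} \<in> events" by measurable
    qed
    also have "{\<omega>\<in>space M. \<forall>i\<le>m. g i \<omega> \<le> a} = (\<Inter>i\<in>{..m}. g i -` {..a} \<inter> space M)" by auto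
    also have "prob \<dots> = (\<Prod>i\<in>{..m}. prob (g i -` {..a} \<inter> space M))"
      by (rule indep_varsD[OF g_indep]) auto
    also have "\<dots> = (\<Prod>i\<in>{..m}. q)"
    proof (rule prod.cong[OF refl])
      fix i
      have "g i -` {..a} \<inter> space M = {x\<in>space M. g i x \<le> a}" by auto
      then show "prob (g i -` {..a} \<inter> space M) = q"
        using exponential_distributedD_le[OF g_distr[of i] a l_pos] by (simp add: q_def mult.commute)
    qed
    also have "\<dots> = q^(Suc m)" by simp
    finally show ?thesis .
  qed
  have "(\<lambda>m. q^(Suc m)) \<longlonglongrightarrow> 0"
    using LIMSEQ_power_zero[of q] q by (simp add: tendsto_mult_right_zero)
  then have "prob ?A \<le> 0"
    using bound by (intro LIMSEQ_le_const) auto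
  then show ?thesis using measure_nonneg[of M ?A] by simp
qed

end

context iid_exp begin

lemma ct_meas[measurable]: "change_time g m \<in> borel_measurable M"
  unfolding change_time_def by measurable

lemma decomp:
  assumes ab: "0 \<le> a" "a \<le> b" and r: "valid b r"
  shows "(\<lambda>n. prob {\<omega>\<in>space M. (\<forall>m<n. change_time g m \<omega> \<le> a) \<and> b < change_time g n \<omega> \<and> (\<forall>k. avoid r (change_time g (n+k) \<omega>))})
     sums prob {\<omega>\<in>space M. \<forall>m. avoid ((a,b)#r) (change_time g m \<omega>)}"
proof -
  define S where "S = change_time g"
  define E where "E n = {\<omega>\<in>space M. (\<forall>m<n. S m \<omega> \<le> a) \<and> b < S n \<omega> \<and> (\<forall>k. avoid r (S (n+k) \<omega>))}" for n
  define EE where "EE = {\<omega>\<in>space M. \<forall>m. avoid ((a,b)#r) (S m \<omega>)}"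
  define A0 where "A0 = {\<omega>\<in>space M. \<forall>m. S m \<omega> \<le> a}"
  have Sm[measurable]: "S m \<in> borel_measurable M" for m unfolding S_def by measurable
  have Es1: "E n \<in> events" for n unfolding E_def by measurable
  then have Es: "range E \<subseteq> events" by auto
  have disj: "disjoint_family E"
    unfolding disjoint_family_on_def
  proof (intro ballI impI)
    fix n n' :: nat assume "n \<noteq> n'"
    then consider "n < n'" | "n' < n" by linarith
    then show "E n \<inter> E n' = {}"
      by cases (use ab in \<open>fastforce simp: E_def\<close>)+
  qed
  have "(\<lambda>n. prob (E n)) sums prob (\<Union>n. E n)"
    by (rule finite_measure_UNION[OF Es disj])
  moreover have "prob (\<Union>n. E n) = prob EE"
  proof (rule finite_measure_eq_AE)
    have "prob A0 = 0" unfolding A0_def S_def by (rule escape[OF ab(1)])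
    then have "AE \<omega> in M. \<omega> \<notin> A0" by (subst prob_eq_0[symmetric]) (auto simp: A0_def)
    then show "AE x in M. (x \<in> (\<Union>n. E n)) = (x \<in> EE)"
      using g_pos_AE
    proof eventually_elim
      case (elim \<omega>)
      have mono: "S m \<omega> \<le> S m' \<omega>" if "m \<le> m'" for m m'
      proof (rule lift_Suc_mono_le[of "\<lambda>m. S m \<omega>", OF _ that])
        fix k
        show "S k \<omega> \<le> S (Suc k) \<omega>" unfolding S_def change_time_def
          using elim(2)[rule_format, of "Suc k"] by simp
      qed
      show ?case
      proof
        assume "\<omega> \<in> (\<Union>n. E n)"
        then obtain n where n: "\<omega> \<in> E n" by auto
        have "avoid ((a,b)#r) (S m \<omega>)" for m
        proof (cases "m < n")
          case True
          then have "S m \<omega> \<le> a" using n by (auto simp: E_def)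
          moreover have "avoid r (S m \<omega>)" using valid_below[OF r] \<open>S m \<omega> \<le> a\<close> ab by simp
          ultimately show ?thesis by (auto simp: avoid_def)
        next
          case False
          then obtain k where k: "m = n + k" by (metis le_add_diff_inverse not_less)
          then have "avoid r (S m \<omega>)" using n by (auto simp: E_def)
          moreover have "b < S m \<omega>" using n mono[of n m] k by (auto simp: E_def)
          ultimately show ?thesis by (auto simp: avoid_def)
        qed
        then show "\<omega> \<in> EE" using n by (auto simp: EE_def E_def)
      next
        assume w: "\<omega> \<in> EE"
        then have sp: "\<omega> \<in> space M" by (auto simp: EE_def)
        then have ex: "\<exists>m. a < S m \<omega>" using elim(1) by (auto simp: A0_def not_le)
        define n where "n = (LEAST m. a < S m \<omega>)"
        have n1: "a < S n \<omega>" unfolding n_def by (rule LeastI_ex[OF ex])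
        have n2: "S m \<omega> \<le> a" if "m < n" for m
          using not_less_Least[OF that[unfolded n_def]] by simp
        have "avoid ((a,b)#r) (S n \<omega>)" using w by (auto simp: EE_def)
        then have n3: "b < S n \<omega>" using n1 by (auto simp: avoid_def)
        have "avoid r (S (n+k) \<omega>)" for k using w by (auto simp: EE_def avoid_def)
        then have "\<omega> \<in> E n" using sp n2 n3 by (auto simp: E_def)
        then show "\<omega> \<in> (\<Union>n. E n)" by auto
      qed
    qed
    show "(\<Union>n. E n) \<in> events" using Es by auto
    show "EE \<in> events" unfolding EE_def by measurable
  qed
  ultimately show ?thesis unfolding E_def EE_def S_def by simp
qed

end

lemma avoid_prob:
  assumes "iid_exp M l g" and "valid 0 ivs"
  shows "prob_space.prob M {\<omega>\<in>space M. \<forall>m. avoid ivs (change_time g m \<omega>)} = exp (-l * ilen ivs)"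
  using assms
proof (induction "length ivs" arbitrary: ivs g rule: less_induct)
  case less
  interpret iid_exp M l g by fact
  show ?case
  proof (cases ivs)
    case Nil
    then show ?thesis by (simp add: avoid_def ilen_def prob_space)
  next
    case (Cons ab r)
    obtain a b where ab: "ab = (a, b)" by (cases ab)
    have v: "0 \<le> a" "a \<le> b" "valid b r" using less.prems(2) Cons ab by auto
    have H: "prob {\<omega>\<in>space M. \<forall>k. avoid (shiftl b r) (change_time (\<lambda>i. g (n+i)) k \<omega>)} = exp (-l * ilen r)" for n
    proof -
      have "valid (b - b) (shiftl b r)" by (rule valid_shiftl[OF v(3)])
      then have "prob {\<omega>\<in>space M. \<forall>k. avoid (shiftl b r) (change_time (\<lambda>i. g (n+i)) k \<omega>)} = exp (-l * ilen (shiftl b r))"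
        using less.hyps[of "shiftl b r" "\<lambda>i. g (n+i)"] Cons shift by (simp add: shiftl_def)
      then show ?thesis by simp
    qed
    define w where "w n = expectation (\<lambda>\<omega>. if \<forall>m<n. change_time g m \<omega> \<le> a then exp (-l*(a - (\<Sum>i<n. g i \<omega>))) else 0)" for n
    have H0: "prob {\<omega>\<in>space M. \<forall>k. avoid (shiftl a []) (change_time (\<lambda>i. g (n+i)) k \<omega>)} = exp (-l * ilen [])" for n
      by (simp add: avoid_def shiftl_def ilen_def prob_space)
    have "(\<lambda>n. prob {\<omega>\<in>space M. (\<forall>m<n. change_time g m \<omega> \<le> a) \<and> a < change_time g n \<omega> \<and> (\<forall>k. avoid [] (change_time g (n+k) \<omega>))})
     sums prob {\<omega>\<in>space M. \<forall>m. avoid ((a,a)#[]) (change_time g m \<omega>)}"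
      by (rule decomp) (use v in auto)
    moreover have "prob {\<omega>\<in>space M. \<forall>m. avoid ((a,a)#[]) (change_time g m \<omega>)} = 1"
      by (simp add: avoid_def prob_space)
    moreover have "prob {\<omega>\<in>space M. (\<forall>m<n. change_time g m \<omega> \<le> a) \<and> a < change_time g n \<omega> \<and> (\<forall>k. avoid [] (change_time g (n+k) \<omega>))} = w n" for n
      using dec[OF v(1) order.refl H0, of n] by (simp add: w_def ilen_def)
    ultimately have wsum: "w sums 1" by simp
    have "(\<lambda>n. prob {\<omega>\<in>space M. (\<forall>m<n. change_time g m \<omega> \<le> a) \<and> b < change_time g n \<omega> \<and> (\<forall>k. avoid r (change_time g (n+k) \<omega>))})
     sums prob {\<omega>\<in>space M. \<forall>m. avoid ((a,b)#r) (change_time g m \<omega>)}"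
      by (rule decomp[OF v])
    moreover have "prob {\<omega>\<in>space M. (\<forall>m<n. change_time g m \<omega> \<le> a) \<and> b < change_time g n \<omega> \<and> (\<forall>k. avoid r (change_time g (n+k) \<omega>))}
       = exp (-l*(b-a)) * exp (-l * ilen r) * w n" for n
      using dec[OF v(1,2) H[of n]] by (simp add: w_def)
    ultimately have "(\<lambda>n. exp (-l*(b-a)) * exp (-l * ilen r) * w n) sums prob {\<omega>\<in>space M. \<forall>m. avoid ((a,b)#r) (change_time g m \<omega>)}"
      by simp
    moreover have "(\<lambda>n. exp (-l*(b-a)) * exp (-l * ilen r) * w n) sums (exp (-l*(b-a)) * exp (-l * ilen r) * 1)"
      by (rule sums_mult[OF wsum])
    ultimately have "prob {\<omega>\<in>space M. \<forall>m. avoid ((a,b)#r) (change_time g m \<omega>)} = exp (-l*(b-a)) * exp (-l * ilen r)"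
      using sums_unique2 by fastforce
    also have "\<dots> = exp (-l * ilen ivs)"
      using Cons ab by (simp add: ilen_def exp_add[symmetric] algebra_simps)
    finally show ?thesis using Cons ab by simp
  qed
qed

lemma integral_exponential_density: "l > 0 \<Longrightarrow> (\<integral>x. exponential_density l x \<partial>lborel) = 1"
proof -
  assume l: "l > 0"
  interpret D: prob_space "density lborel (exponential_density l)"
    by (rule prob_space_exponential_density[OF l])
  have "measure (density lborel (exponential_density l)) UNIV = (\<integral>x. exponential_density l x \<partial>lborel)"
    using integral_density[of "\<lambda>x. 1::real" lborel "exponential_density l"] by (simp add: exponential_density_nonneg[OF l])
  then show ?thesis using D.prob_space by simp
qed

lemma (in prob_space) exp_laplace:
  assumes D: "distributed M lborel X (exponential_density l)" and l: "l > 0" and d: "d \<ge> 0"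
  shows "expectation (\<lambda>\<omega>. exp (-d * max 0 (X \<omega>))) = l / (l + d)"
proof -
  have "expectation (\<lambda>\<omega>. exp (-d * max 0 (X \<omega>))) = (\<integral>x. exponential_density l x * exp (-d * max 0 x) \<partial>lborel)"
    by (rule distributed_integral[OF D, symmetric]) (auto simp: exponential_density_nonneg[OF l])
  also have "\<dots> = (\<integral>x. (l / (l + d)) * exponential_density (l + d) x \<partial>lborel)"
  proof (rule Bochner_Integration.integral_cong[OF refl])
    fix x :: real
    show "exponential_density l x * exp (-d * max 0 x) = (l / (l + d)) * exponential_density (l + d) x"
      using l d by (auto simp: exponential_density_def exp_add[symmetric] field_simps)
  qed
  also have "\<dots> = l / (l + d) * (\<integral>x. exponential_density (l + d) x \<partial>lborel)"
    by simp
  also have "\<dots> = l / (l + d)" using integral_exponential_density[of "l + d"] l d by simp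
  finally show ?thesis .
qed

lemma (in prob_space) indep_vars_indicator:
  assumes "indep_events E I"
  shows "indep_vars (\<lambda>_. borel) (\<lambda>i \<omega>. indicator (E i) \<omega> :: real) I"
proof -
  have Es: "E i \<in> events" if "i \<in> I" for i using assms that by (auto simp: indep_events_def)
  have ind: "indep_sets (\<lambda>i. sigma_sets (space M) {E i}) I"
    using assms unfolding indep_events_def_alt by (rule indep_sets_sigma) (auto simp: Int_stable_def)
  show ?thesis unfolding indep_vars_def
  proof (intro conjI ballI)
    fix i assume "i \<in> I"
    then show "random_variable borel (\<lambda>\<omega>. indicator (E i) \<omega> :: real)"
      using Es by measurable
  next
    show "indep_sets (\<lambda>i. sigma_sets (space M) {(\<lambda>\<omega>. indicator (E i) \<omega> :: real) -` B \<inter> space M |B. B \<in> sets borel}) I"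
    proof (rule indep_sets_mono_sets[OF ind])
      fix i assume i: "i \<in> I"
      have sub: "{(\<lambda>\<omega>. indicator (E i) \<omega> :: real) -` B \<inter> space M |B. B \<in> sets borel} \<subseteq> sigma_sets (space M) {E i}"
      proof safe
        fix B :: "real set"
        have "(\<lambda>\<omega>. indicator (E i) \<omega> :: real) -` B \<inter> space M =
          (if 1 \<in> B then E i \<inter> space M else {}) \<union> (if 0 \<in> B then space M - E i else {})"
          by (auto simp: indicator_def of_bool_def split: if_splits)
        also have "\<dots> \<in> sigma_sets (space M) {E i}"
        proof -
          have "E i \<inter> space M = E i" using Es[OF i] sets.sets_into_space by auto
          then have a: "E i \<inter> space M \<in> sigma_sets (space M) {E i}" by auto
          have b: "space M - E i \<in> sigma_sets (space M) {E i}" by (auto intro: sigma_sets.Compl)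
          show ?thesis using a b by (auto intro: sigma_sets_Un sigma_sets.Empty)
        qed
        finally show "(\<lambda>\<omega>. indicator (E i) \<omega> :: real) -` B \<inter> space M \<in> sigma_sets (space M) {E i}" .
      qed
      show "sigma_sets (space M) {(\<lambda>\<omega>. indicator (E i) \<omega> :: real) -` B \<inter> space M |B. B \<in> sets borel} \<subseteq> sigma_sets (space M) {E i}"
        using sigma_sets_mono[OF sub] by (simp add: sigma_sets_sigma_sets_eq)
    qed
  qed
qed

lemma valid_map:
  fixes h :: "nat \<Rightarrow> real"
  assumes h: "mono h"
  shows "sorted_wrt (<) js \<Longrightarrow> (\<forall>j\<in>set js. c \<le> j - 1) \<Longrightarrow> valid (h c) (map (\<lambda>j. (h (j-1), h j)) js)"
proof (induction js arbitrary: c)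
  case (Cons j js)
  have "valid (h j) (map (\<lambda>j. (h (j-1), h j)) js)"
    using Cons by (intro Cons.IH) auto
  moreover have "h c \<le> h (j - 1)" "h (j - 1) \<le> h j" using Cons.prems h by (auto intro: monoD)
  ultimately show ?case by simp
qed simp

locale model = prob_space +
  fixes \<Delta> p :: real and G A :: "nat \<Rightarrow> 'a \<Rightarrow> real"
  assumes Delta_pos: "\<Delta> > 0" and p_pos: "p > 0"
    and G_distr: "\<And>n. distributed M lborel (G n) (exponential_density \<Delta>)"
    and A_distr: "\<And>n. distributed M lborel (A n) (exponential_density p)"
    and GA_indep: "indep_vars (\<lambda>_. borel) (\<lambda>i. case i of Inl n \<Rightarrow> G n | Inr n \<Rightarrow> A n) UNIV"
begin

lemma iidG: "iid_exp M \<Delta> G"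
proof unfold_locales
  show "indep_vars (\<lambda>_. borel) G UNIV"
    using indep_vars_reindex[OF GA_indep, of Inl UNIV] by simp
qed (auto intro: Delta_pos G_distr)

lemma iidA: "iid_exp M p A"
proof unfold_locales
  show "indep_vars (\<lambda>_. borel) A UNIV"
    using indep_vars_reindex[OF GA_indep, of Inr UNIV] by simp
qed (auto intro: p_pos A_distr)

lemma G_meas[measurable]: "G n \<in> borel_measurable M"
  using iid_exp.g_meas[OF iidG] .
lemma A_meas[measurable]: "A n \<in> borel_measurable M"
  using iid_exp.g_meas[OF iidA] .

lemma indAG: "indep_var (PiM UNIV (\<lambda>_. borel)) (\<lambda>\<omega> i. A i \<omega>) (PiM UNIV (\<lambda>_. borel)) (\<lambda>\<omega> i. G i \<omega>)"
proof -
  let ?F = "\<lambda>i. case i of Inl n \<Rightarrow> G n | Inr n \<Rightarrow> A n"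
  have sp: "indep_var (PiM (range Inr) (\<lambda>_. borel)) (\<lambda>\<omega>. restrict (\<lambda>i. ?F i \<omega>) (range Inr))
                      (PiM (range Inl) (\<lambda>_. borel)) (\<lambda>\<omega>. restrict (\<lambda>i. ?F i \<omega>) (range Inl))"
    using indep_var_restrict[OF GA_indep, of "range Inr" "range Inl"] by auto
  have m1: "(\<lambda>f. \<lambda>i. f (Inr i)) \<in> measurable (PiM (range Inr) (\<lambda>_. borel)) (PiM UNIV (\<lambda>_. borel::real measure))"
    by (rule measurable_PiM_single') (auto intro!: measurable_component_singleton)
  have m2: "(\<lambda>f. \<lambda>i. f (Inl i)) \<in> measurable (PiM (range Inl) (\<lambda>_. borel)) (PiM UNIV (\<lambda>_. borel::real measure))"
    by (rule measurable_PiM_single') (auto intro!: measurable_component_singleton)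
  from indep_var_compose[OF sp m1 m2] show ?thesis by (simp add: comp_def)
qed

definition Ec :: "nat \<Rightarrow> 'a set" where
  "Ec j = {\<omega>\<in>space M. \<forall>n. \<not> (access_time A (j-1) \<omega> < change_time G n \<omega> \<and> change_time G n \<omega> \<le> access_time A j \<omega>)}"

lemma Ec_sets[measurable]: "Ec j \<in> events"
  unfolding Ec_def access_time_def change_time_def by measurable

lemma change_ind_Ec: "\<omega> \<in> space M \<Longrightarrow> change_ind G A j \<omega> = 1 - indicator (Ec j) \<omega>"
  by (auto simp: change_ind_def Ec_def indicator_def)

end

context model begin

lemma prob_inter_Ec:
  assumes J: "finite J" "J \<noteq> {}" "J \<subseteq> {1..}"
  shows "prob (\<Inter>j\<in>J. Ec j) = (p / (p + \<Delta>)) ^ card J"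
proof -
  let ?PU = "PiM UNIV (\<lambda>_. borel::real measure)"
  define Aseq where "Aseq = (\<lambda>\<omega> i. A i \<omega>)"
  define Gseq where "Gseq = (\<lambda>\<omega> i. G i \<omega>)"
  define Tp where "Tp a j = (\<Sum>i<j. max 0 (a i))" for a :: "nat \<Rightarrow> real" and j
  define ivs where "ivs a = map (\<lambda>j. (Tp a (j-1), Tp a j)) (sorted_list_of_set J)" for a
  define R where "R a gs \<longleftrightarrow> (\<forall>j\<in>J. \<forall>n. \<not> ((\<Sum>i<j-1. a i) < (\<Sum>i\<le>n. gs i) \<and> (\<Sum>i\<le>n. gs i) \<le> (\<Sum>i<j. a i)))"
    for a gs :: "nat \<Rightarrow> real"
  have ind: "indep_var ?PU Aseq ?PU Gseq" using indAG by (simp add: Aseq_def Gseq_def)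
  have Aseqm[measurable]: "Aseq \<in> measurable M ?PU" using ind by (auto dest: indep_var_rv1)
  have ev: "(\<Inter>j\<in>J. Ec j) = {\<omega>\<in>space M. R (Aseq \<omega>) (Gseq \<omega>)}"
    using J(2) by (auto simp: Ec_def R_def Aseq_def Gseq_def access_time_def change_time_def)
  have Rm: "Measurable.pred (?PU \<Otimes>\<^sub>M ?PU) (\<lambda>z. R (fst z) (snd z))"
  proof -
    have [measurable]: "(\<lambda>z. \<Sum>i<k. fst z i) \<in> borel_measurable (?PU \<Otimes>\<^sub>M ?PU)" for k :: nat
      by (intro borel_measurable_sum) measurable
    have [measurable]: "(\<lambda>z. \<Sum>i\<le>k. snd z i) \<in> borel_measurable (?PU \<Otimes>\<^sub>M ?PU)" for k :: nat
      by (intro borel_measurable_sum) measurable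
    show ?thesis unfolding R_def using J(1) by measurable
  qed
  have "prob {\<omega>\<in>space M. R (Aseq \<omega>) (Gseq \<omega>)} = (\<integral>a. prob {\<omega>\<in>space M. R a (Gseq \<omega>)} \<partial>distr M ?PU Aseq)"
    by (rule prob_indep_fubini[OF ind Rm])
  also have "\<dots> = (\<integral>a. (\<Prod>j\<in>J. exp (-\<Delta> * max 0 (a (j-1)))) \<partial>distr M ?PU Aseq)"
  proof (rule integral_cong_AE)
    have "AE \<omega> in M. \<forall>i. 0 \<le> Aseq \<omega> i"
      using iid_exp.g_pos_AE[OF iidA] by eventually_elim (auto simp: Aseq_def less_imp_le)
    then have "AE a in distr M ?PU Aseq. \<forall>i. 0 \<le> a i"
      by (subst AE_distr_iff) auto
    then show "AE a in distr M ?PU Aseq. prob {\<omega>\<in>space M. R a (Gseq \<omega>)} = (\<Prod>j\<in>J. exp (-\<Delta> * max 0 (a (j-1))))"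
    proof eventually_elim
      case (elim a)
      have Tp_eq: "Tp a j = (\<Sum>i<j. a i)" for j using elim by (auto simp: Tp_def intro!: sum.cong)
      have mono: "mono (Tp a)"
        by (auto simp: mono_def Tp_def intro!: sum_mono2)
      have setJ: "set (sorted_list_of_set J) = J" using J(1) by simp
      have valid: "valid 0 (ivs a)"
      proof -
        have "valid (Tp a 0) (ivs a)" unfolding ivs_def
          by (rule valid_map[OF mono]) (auto simp: strict_sorted_list_of_set)
        then show ?thesis by (simp add: Tp_def)
      qed
      have "{\<omega>\<in>space M. R a (Gseq \<omega>)} = {\<omega>\<in>space M. \<forall>m. avoid (ivs a) (change_time G m \<omega>)}"
        by (auto simp: R_def avoid_def ivs_def setJ Tp_eq Gseq_def change_time_def)
      then have "prob {\<omega>\<in>space M. R a (Gseq \<omega>)} = exp (-\<Delta> * ilen (ivs a))"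
        using avoid_prob[OF iidG valid] by simp
      also have "ilen (ivs a) = (\<Sum>j\<in>J. max 0 (a (j-1)))"
      proof -
        have "ilen (ivs a) = (\<Sum>j\<in>J. Tp a j - Tp a (j-1))"
          unfolding ilen_def ivs_def using J(1)
          by (simp add: comp_def sum_list_distinct_conv_sum_set)
        also have "\<dots> = (\<Sum>j\<in>J. max 0 (a (j-1)))"
        proof (rule sum.cong[OF refl])
          fix j assume "j \<in> J"
          then obtain j' where "j = Suc j'" using J(3) by (cases j) auto
          then show "Tp a j - Tp a (j-1) = max 0 (a (j-1))" by (simp add: Tp_def)
        qed
        finally show ?thesis .
      qed
      also have "exp (-\<Delta> * (\<Sum>j\<in>J. max 0 (a (j-1)))) = (\<Prod>j\<in>J. exp (-\<Delta> * max 0 (a (j-1))))"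
        by (simp add: sum_distrib_left exp_sum[OF J(1)])
      finally show ?case .
    qed
    show "(\<lambda>a. prob {\<omega> \<in> space M. R a (Gseq \<omega>)}) \<in> borel_measurable (distr M ?PU Aseq)"
      using prob_Pair_measurable[OF _ Rm, of Gseq] ind by (auto dest: indep_var_rv2)
  qed (use Aseqm in \<open>auto simp: Aseq_def\<close>)
  also have "\<dots> = expectation (\<lambda>\<omega>. \<Prod>j\<in>J. exp (-\<Delta> * max 0 (A (j-1) \<omega>)))"
    by (subst integral_distr[OF Aseqm]) (auto simp: Aseq_def)
  also have "\<dots> = (\<Prod>j\<in>J. expectation (\<lambda>\<omega>. exp (-\<Delta> * max 0 (A (j-1) \<omega>))))"
  proof (rule indep_vars_lebesgue_integral)
    show "finite J" by fact
    have "indep_vars (\<lambda>_. borel) (\<lambda>j. A (j-1)) J"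
    proof -
      have inj: "inj_on (\<lambda>j. j - 1) J" using J(3) by (intro inj_on_diff_nat) auto
      show ?thesis using indep_vars_reindex[OF iid_exp.g_indep[OF iidA] inj] by simp
    qed
    then show "indep_vars (\<lambda>_. borel) (\<lambda>j \<omega>. exp (-\<Delta> * max 0 (A (j-1) \<omega>))) J"
      by (rule indep_vars_compose2) measurable
    show "integrable M (\<lambda>\<omega>. exp (-\<Delta> * max 0 (A (j-1) \<omega>)))" for j
      by (rule integrable_const_bound[where B=1]) (use Delta_pos in \<open>auto simp: mult_nonneg_nonneg\<close>)
  qed
  also have "\<dots> = (\<Prod>j\<in>J. p / (p + \<Delta>))"
    by (intro prod.cong refl exp_laplace[OF A_distr p_pos]) (use Delta_pos in auto)
  also have "\<dots> = (p / (p + \<Delta>)) ^ card J" by simp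
  finally show ?thesis unfolding ev .
qed

end

lemma (in prob_space) indep_vars_cong_space:
  assumes "indep_vars M' X I" and "\<And>i \<omega>. i \<in> I \<Longrightarrow> \<omega> \<in> space M \<Longrightarrow> X i \<omega> = Y i \<omega>"
  shows "indep_vars M' Y I"
proof -
  have pre: "X i -` B \<inter> space M = Y i -` B \<inter> space M" if "i \<in> I" for i B
    using assms(2)[OF that] by auto
  have rv: "random_variable (M' i) (Y i)" if "i \<in> I" for i
  proof -
    have "random_variable (M' i) (X i)" using assms(1) that by (auto simp: indep_vars_def)
    then show ?thesis by (rule measurable_cong[THEN iffD1, rotated]) (use assms(2)[OF that] in auto)
  qed
  have "indep_sets (\<lambda>i. {X i -` B \<inter> space M | B. B \<in> sets (M' i)}) I"
    using assms(1) by (auto simp: indep_vars_def2)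
  moreover have "indep_sets (\<lambda>i. {X i -` B \<inter> space M | B. B \<in> sets (M' i)}) I
      \<longleftrightarrow> indep_sets (\<lambda>i. {Y i -` B \<inter> space M | B. B \<in> sets (M' i)}) I"
    by (intro indep_sets_cong refl) (simp add: pre)
  ultimately show ?thesis using rv by (auto simp: indep_vars_def2)
qed

context model begin

definition q :: real where "q = \<Delta> / (p + \<Delta>)"

lemma q_bounds: "0 < q" "q < 1" using Delta_pos p_pos by (auto simp: q_def)

lemma prob_Ec: "j \<ge> 1 \<Longrightarrow> prob (Ec j) = p / (p + \<Delta>)"
  using prob_inter_Ec[of "{j}"] by simp

lemma indep_Ec: "indep_events Ec {1..}"
proof (rule indep_eventsI)
  fix J :: "nat set" assume J: "J \<subseteq> {1..}" "finite J" "J \<noteq> {}"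
  have "prob (\<Inter>i\<in>J. Ec i) = (p / (p + \<Delta>)) ^ card J" using prob_inter_Ec J by simp
  also have "\<dots> = (\<Prod>i\<in>J. prob (Ec i))" using J prob_Ec by (simp add: subset_eq)
  finally show "prob (\<Inter>i\<in>J. Ec i) = (\<Prod>i\<in>J. prob (Ec i))" .
qed simp

lemma ci_meas[measurable]: "change_ind G A j \<in> borel_measurable M"
proof -
  have "(\<lambda>\<omega>. 1 - indicator (Ec j) \<omega> :: real) \<in> borel_measurable M" by measurable
  then show ?thesis by (rule measurable_cong[THEN iffD2, rotated]) (simp add: change_ind_Ec)
qed

lemma indep_ci: "indep_vars (\<lambda>_. borel) (\<lambda>j. change_ind G A j) {1..}"
proof -
  have "indep_vars (\<lambda>_. borel) (\<lambda>j \<omega>. indicator (Ec j) \<omega> :: real) {1..}"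
    by (rule indep_vars_indicator[OF indep_Ec])
  then have "indep_vars (\<lambda>_. borel) (\<lambda>j \<omega>. 1 - indicator (Ec j) \<omega> :: real) {1..}"
    by (rule indep_vars_compose2) measurable
  then show ?thesis by (rule indep_vars_cong_space) (simp add: change_ind_Ec)
qed

lemma ci_01: "change_ind G A j \<omega> \<in> {0, 1}"
  by (simp add: change_ind_def)

lemma expect_ci: "j \<ge> 1 \<Longrightarrow> expectation (change_ind G A j) = q"
proof -
  assume j: "j \<ge> 1"
  have "expectation (change_ind G A j) = expectation (\<lambda>\<omega>. 1 - indicator (Ec j) \<omega>)"
    by (rule Bochner_Integration.integral_cong) (auto simp: change_ind_Ec)
  also have "\<dots> = 1 - prob (Ec j)"
    by (subst Bochner_Integration.integral_diff) (auto intro!: integrable_real_indicator simp: prob_space less_top[symmetric])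
  also have "\<dots> = q" using prob_Ec[OF j] Delta_pos p_pos by (simp add: q_def field_simps)
  finally show ?thesis .
qed

lemma cc_meas[measurable]: "change_count G A k \<in> borel_measurable M"
  unfolding change_count_def[abs_def] by measurable

lemma hoeffding_cc:
  assumes k: "k \<ge> 1" and e: "\<epsilon> \<ge> 0"
  shows "prob {\<omega>\<in>space M. \<bar>change_count G A k \<omega> - real k * q\<bar> \<ge> \<epsilon>} \<le> 2 * exp (-2 * \<epsilon>\<^sup>2 / real k)"
proof -
  interpret H: Hoeffding_ineq M "{1..k}" "\<lambda>j. change_ind G A j" "\<lambda>_. 0" "\<lambda>_. 1" "real k * q"
  proof unfold_locales
    show "finite {1..k}" by simp
    show "indep_vars (\<lambda>_. borel) (\<lambda>j. change_ind G A j) {1..k}"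
      by (rule indep_vars_subset[OF indep_ci]) auto
    show "AE x in M. change_ind G A i x \<in> {0..1}" for i
      using ci_01[of i] by (auto simp: change_ind_def)
    show "real k * q \<equiv> (\<Sum>i = 1..k. expectation (change_ind G A i))"
      by (simp add: expect_ci)
  qed
  have "prob {x\<in>space M. \<bar>(\<Sum>i\<in>{1..k}. change_ind G A i x) - real k * q\<bar> \<ge> \<epsilon>}
      \<le> 2 * exp (-2 * \<epsilon>\<^sup>2 / (\<Sum>i\<in>{1..k}. (1 - 0)\<^sup>2))"
    by (rule H.Hoeffding_ineq_abs_ge[OF e]) (use k in simp)
  then show ?thesis by (simp add: change_count_def)
qed

end

context model begin

lemma as_conv_m:
  fixes m :: nat
  shows "AE \<omega> in M. eventually (\<lambda>k. \<bar>change_count G A k \<omega> / real k - q\<bar> < 1 / real (Suc m)) sequentially"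
proof -
  define \<delta> :: real where "\<delta> = 1 / real (Suc m)"
  have \<delta>: "\<delta> > 0" by (simp add: \<delta>_def)
  define B where "B k = {\<omega>\<in>space M. real k * \<delta> \<le> \<bar>change_count G A k \<omega> - real k * q\<bar>}" for k
  have Bs[measurable]: "B k \<in> events" for k unfolding B_def by measurable
  have bound: "prob (B k) \<le> 2 * exp (-2 * \<delta>\<^sup>2) ^ k" if k: "k \<ge> 1" for k
  proof -
    have "prob (B k) \<le> 2 * exp (-2 * (real k * \<delta>)\<^sup>2 / real k)"
      unfolding B_def by (rule hoeffding_cc[OF k]) (use \<delta> in simp)
    also have "-2 * (real k * \<delta>)\<^sup>2 / real k = real k * (-2 * \<delta>\<^sup>2)"
      using k by (simp add: power2_eq_square field_simps)
    also have "exp \<dots> = exp (-2 * \<delta>\<^sup>2) ^ k" by (rule exp_of_nat_mult)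
    finally show ?thesis .
  qed
  have "summable (\<lambda>k. prob (B k))"
  proof (rule summable_comparison_test'[where N=1])
    show "summable (\<lambda>k. 2 * exp (-2 * \<delta>\<^sup>2) ^ k)"
      using \<delta> by (intro summable_mult summable_geometric) simp
    show "norm (prob (B k)) \<le> 2 * exp (-2 * \<delta>\<^sup>2) ^ k" if "k \<ge> 1" for k
      using bound[OF that] by simp
  qed
  then have "AE \<omega> in M. eventually (\<lambda>k. \<omega> \<in> space M - B k) sequentially"
    by (intro borel_cantelli_AE1) (auto simp: emeasure_eq_measure)
  then show ?thesis
  proof eventually_elim
    case (elim \<omega>)
    then show ?case
      using eventually_ge_at_top[of 1]
    proof eventually_elim
      case (elim k)
      then have "\<bar>change_count G A k \<omega> - real k * q\<bar> < real k * \<delta>" by (auto simp: B_def)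
      then have "\<bar>(change_count G A k \<omega> - real k * q) / real k\<bar> < \<delta>"
        using elim(2) by (simp add: field_simps)
      moreover have "(change_count G A k \<omega> - real k * q) / real k = change_count G A k \<omega> / real k - q"
        using elim(2) by (simp add: field_simps)
      ultimately show ?case by (simp add: \<delta>_def)
    qed
  qed
qed

lemma as_conv: "AE \<omega> in M. (\<lambda>k. change_count G A k \<omega> / real k) \<longlonglongrightarrow> q"
proof -
  have "AE \<omega> in M. \<forall>m. eventually (\<lambda>k. \<bar>change_count G A k \<omega> / real k - q\<bar> < 1 / real (Suc m)) sequentially"
    by (subst AE_all_countable) (intro allI as_conv_m)
  then show ?thesis
  proof eventually_elim
    case (elim \<omega>)
    show ?case
    proof (rule tendstoI)
      fix e :: real assume "e > 0"
      then obtain m where m: "inverse (real (Suc m)) < e" using reals_Archimedean by blast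
      show "eventually (\<lambda>k. dist (change_count G A k \<omega> / real k) q < e) sequentially"
        using elim[rule_format, of m]
        by eventually_elim (use m in \<open>auto simp: dist_real_def divide_inverse\<close>)
    qed
  qed
qed

lemma Delta_eq: "\<Delta> = p * q / (1 - q)"
proof -
  have pd: "p + \<Delta> > 0" using Delta_pos p_pos by simp
  have "1 - q = p / (p + \<Delta>)" using pd by (simp add: q_def field_simps)
  then have "p * q / (1 - q) = p * (\<Delta> / (p + \<Delta>)) / (p / (p + \<Delta>))" by (simp add: q_def)
  also have "\<dots> = \<Delta>" using pd p_pos by (subst divide_eq_eq) auto
  finally show ?thesis by simp
qed

lemma part1:
  assumes a: "(\<lambda>k. \<alpha> k / real k) \<longlonglongrightarrow> 0"
  shows "AE \<omega> in M. (\<lambda>k. lln_est p \<alpha> G A k \<omega>) \<longlonglongrightarrow> \<Delta>"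
  using as_conv
proof eventually_elim
  case (elim \<omega>)
  have "(\<lambda>k. p * (change_count G A k \<omega> / real k) / (1 + \<alpha> k / real k - change_count G A k \<omega> / real k))
        \<longlonglongrightarrow> p * q / (1 + 0 - q)"
    using q_bounds by (intro tendsto_intros elim a) simp
  then have lim: "(\<lambda>k. p * (change_count G A k \<omega> / real k) / (1 + \<alpha> k / real k - change_count G A k \<omega> / real k))
        \<longlonglongrightarrow> \<Delta>"
    using Delta_eq by simp
  show ?case
  proof (rule Lim_transform_eventually[OF lim])
    show "eventually (\<lambda>k. p * (change_count G A k \<omega> / real k) / (1 + \<alpha> k / real k - change_count G A k \<omega> / real k)
       = lln_est p \<alpha> G A k \<omega>) sequentially"
      using eventually_ge_at_top[of 1]
    proof eventually_elim
      case (elim k)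
      then have k: "real k > 0" by simp
      have "1 + \<alpha> k / real k - change_count G A k \<omega> / real k = (real k + \<alpha> k - change_count G A k \<omega>) / real k"
        using k by (simp add: field_simps)
      then show ?case using k by (simp add: lln_est_def)
    qed
  qed
qed

end

context model begin

lemma cc_bounds: "0 \<le> change_count G A k \<omega>" "change_count G A k \<omega> \<le> real k"
proof -
  have b: "0 \<le> change_ind G A j \<omega>" "change_ind G A j \<omega> \<le> 1" for j
    by (auto simp: change_ind_def)
  show "0 \<le> change_count G A k \<omega>" unfolding change_count_def by (intro sum_nonneg b)
  have "change_count G A k \<omega> \<le> (\<Sum>j=1..k. 1)" unfolding change_count_def by (intro sum_mono b)
  then show "change_count G A k \<omega> \<le> real k" by simp
qed

lemma second_moment:
  "expectation (\<lambda>\<omega>. (change_count G A k \<omega> - real k * q)\<^sup>2) \<le> real k"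
proof -
  define Z where "Z = (\<lambda>j \<omega>. change_ind G A j \<omega> - q)"
  have Zm[measurable]: "Z j \<in> borel_measurable M" for j unfolding Z_def by measurable
  have Zb: "\<bar>Z j \<omega>\<bar> \<le> 1" for j \<omega>
    using q_bounds by (auto simp: Z_def change_ind_def)
  have Zint: "integrable M (Z j)" for j
    by (rule integrable_const_bound[where B=1]) (auto simp: Zb)
  have ZZint: "integrable M (\<lambda>\<omega>. Z i \<omega> * Z j \<omega>)" for i j
  proof (rule integrable_const_bound[where B=1])
    have "\<bar>Z i x\<bar> * \<bar>Z j x\<bar> \<le> 1" for x by (rule mult_le_one) (auto simp: Zb)
    then show "AE x in M. norm (Z i x * Z j x) \<le> 1" by (simp add: abs_mult)
  qed simp
  have indZ: "indep_vars (\<lambda>_. borel) Z {1..}"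
    unfolding Z_def by (rule indep_vars_compose2[OF indep_ci]) measurable
  have EZ: "expectation (Z j) = 0" if "j \<ge> 1" for j
  proof -
    have ci_int: "integrable M (change_ind G A j)"
      by (rule integrable_const_bound[where B=1]) (auto simp: change_ind_def)
    have "expectation (Z j) = expectation (change_ind G A j) - expectation (\<lambda>_. q)"
      unfolding Z_def by (rule Bochner_Integration.integral_diff[OF ci_int]) simp
    then show ?thesis using expect_ci[OF that] by (simp add: prob_space)
  qed
  have cross: "expectation (\<lambda>\<omega>. Z i \<omega> * Z j \<omega>) = 0" if "i \<ge> 1" "j \<ge> 1" "i \<noteq> j" for i j
  proof -
    have "expectation (\<lambda>\<omega>. \<Prod>t\<in>{i,j}. Z t \<omega>) = (\<Prod>t\<in>{i,j}. expectation (Z t))"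
    proof (rule indep_vars_lebesgue_integral)
      show "indep_vars (\<lambda>_. borel) Z {i, j}" by (rule indep_vars_subset[OF indZ]) (use that in auto)
    qed (auto intro: Zint)
    then show ?thesis using that EZ by simp
  qed
  have sq: "(change_count G A k \<omega> - real k * q)\<^sup>2 = (\<Sum>i=1..k. \<Sum>j=1..k. Z i \<omega> * Z j \<omega>)" for \<omega>
  proof -
    have "change_count G A k \<omega> - real k * q = (\<Sum>i=1..k. Z i \<omega>)"
      by (simp add: Z_def change_count_def sum_subtractf)
    then show ?thesis by (simp add: power2_eq_square sum_product)
  qed
  have "expectation (\<lambda>\<omega>. (change_count G A k \<omega> - real k * q)\<^sup>2) = (\<Sum>i=1..k. \<Sum>j=1..k. expectation (\<lambda>\<omega>. Z i \<omega> * Z j \<omega>))"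
    unfolding sq by (simp add: Bochner_Integration.integral_sum ZZint)
  also have "\<dots> = (\<Sum>i=1..k. expectation (\<lambda>\<omega>. Z i \<omega> * Z i \<omega>))"
  proof (rule sum.cong[OF refl])
    fix i assume i: "i \<in> {1..k}"
    have "(\<Sum>j=1..k. expectation (\<lambda>\<omega>. Z i \<omega> * Z j \<omega>)) = (\<Sum>j\<in>{i}. expectation (\<lambda>\<omega>. Z i \<omega> * Z j \<omega>))"
      using i by (intro sum.mono_neutral_right) (auto intro: cross)
    then show "(\<Sum>j=1..k. expectation (\<lambda>\<omega>. Z i \<omega> * Z j \<omega>)) = expectation (\<lambda>\<omega>. Z i \<omega> * Z i \<omega>)" by simp
  qed
  also have "\<dots> \<le> (\<Sum>i=1..k. 1)"
  proof (rule sum_mono)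
    fix i
    have "expectation (\<lambda>\<omega>. Z i \<omega> * Z i \<omega>) \<le> expectation (\<lambda>\<omega>. 1)"
    proof (rule integral_mono[OF ZZint])
      fix x
      have "\<bar>Z i x\<bar> * \<bar>Z i x\<bar> \<le> 1" by (rule mult_le_one) (auto simp: Zb)
      then show "Z i x * Z i x \<le> 1" by (simp add: abs_mult[symmetric])
    qed simp
    then show "expectation (\<lambda>\<omega>. Z i \<omega> * Z i \<omega>) \<le> 1" by (simp add: prob_space)
  qed
  finally show ?thesis by simp
qed

end

lemma amgm_abs: fixes y s :: real assumes s: "s > 0" shows "\<bar>y\<bar> \<le> s / 2 * y\<^sup>2 + 1 / (2 * s)"
proof -
  have "0 \<le> (s * \<bar>y\<bar> - 1)\<^sup>2" by simp
  then have "2 * s * \<bar>y\<bar> \<le> s\<^sup>2 * y\<^sup>2 + 1" by (simp add: power2_eq_square algebra_simps)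
  then show ?thesis using s by (simp add: field_simps power2_eq_square)
qed

context model begin

lemma abs_dev_bound:
  assumes k: "k \<ge> 1"
  shows "expectation (\<lambda>\<omega>. \<bar>change_count G A k \<omega> / real k - q\<bar>) \<le> 1 / sqrt (real k)"
proof -
  define s where "s = sqrt (real k)"
  have s: "s > 0" using k by (simp add: s_def)
  have s2: "s\<^sup>2 = real k" by (simp add: s_def)
  have kpos: "real k > 0" using k by simp
  have dev: "change_count G A k \<omega> / real k - q = (change_count G A k \<omega> - real k * q) / real k" for \<omega>
    using kpos by (simp add: field_simps)
  have b1: "\<bar>change_count G A k \<omega> - real k * q\<bar> \<le> real k" for \<omega>
  proof -
    have "0 \<le> real k * q" "real k * q \<le> real k" using q_bounds by (auto intro: mult_left_le)
    then show ?thesis using cc_bounds[of k \<omega>] by (simp add: abs_le_iff)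
  qed
  have int1: "integrable M (\<lambda>\<omega>. (change_count G A k \<omega> - real k * q)\<^sup>2)"
  proof (rule integrable_const_bound[where B="(real k)\<^sup>2"])
    show "AE x in M. norm ((change_count G A k x - real k * q)\<^sup>2) \<le> (real k)\<^sup>2"
    proof (intro AE_I2)
      fix x
      have "\<bar>change_count G A k x - real k * q\<bar>\<^sup>2 \<le> (real k)\<^sup>2"
        by (rule power_mono[OF b1]) simp
      then show "norm ((change_count G A k x - real k * q)\<^sup>2) \<le> (real k)\<^sup>2" by simp
    qed
  qed simp
  have int2: "integrable M (\<lambda>\<omega>. \<bar>change_count G A k \<omega> / real k - q\<bar>)"
  proof (rule integrable_const_bound[where B="1"])
    show "AE x in M. norm (\<bar>change_count G A k x / real k - q\<bar>) \<le> 1"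
      using b1 kpos by (auto simp: dev abs_divide)
  qed simp
  have "expectation (\<lambda>\<omega>. \<bar>change_count G A k \<omega> / real k - q\<bar>)
      \<le> expectation (\<lambda>\<omega>. s / 2 / (real k)\<^sup>2 * (change_count G A k \<omega> - real k * q)\<^sup>2 + 1 / (2 * s))"
  proof (rule integral_mono[OF int2])
    show "integrable M (\<lambda>\<omega>. s / 2 / (real k)\<^sup>2 * (change_count G A k \<omega> - real k * q)\<^sup>2 + 1 / (2 * s))"
      using int1 by simp
    fix \<omega>
    have "\<bar>change_count G A k \<omega> / real k - q\<bar> \<le> s / 2 * (change_count G A k \<omega> / real k - q)\<^sup>2 + 1 / (2 * s)"
      by (rule amgm_abs[OF s])
    also have "(change_count G A k \<omega> / real k - q)\<^sup>2 = (change_count G A k \<omega> - real k * q)\<^sup>2 / (real k)\<^sup>2"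
      by (simp add: dev power_divide)
    finally show "\<bar>change_count G A k \<omega> / real k - q\<bar> \<le> s / 2 / (real k)\<^sup>2 * (change_count G A k \<omega> - real k * q)\<^sup>2 + 1 / (2 * s)"
      by simp
  qed
  also have "\<dots> = s / 2 / (real k)\<^sup>2 * expectation (\<lambda>\<omega>. (change_count G A k \<omega> - real k * q)\<^sup>2) + 1 / (2 * s)"
    using int1 by (simp add: prob_space)
  also have "\<dots> \<le> s / 2 / (real k)\<^sup>2 * real k + 1 / (2 * s)"
    using second_moment[of k] s by (intro add_mono mult_left_mono) auto
  also have "\<dots> = 1 / s" using s s2 kpos by (simp add: field_simps power2_eq_square)
  finally show ?thesis by (simp add: s_def)
qed

end

context model begin

definition C1 :: real where "C1 = 2 * p / (1 - q)\<^sup>2"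
definition cexp :: real where "cexp = (1 - q)\<^sup>2 / 2"

lemma C1_pos: "C1 > 0" and cexp_pos: "cexp > 0"
  using q_bounds p_pos by (auto simp: C1_def cexp_def)

lemma lln_alt:
  assumes k: "k \<ge> 1"
  shows "lln_est p \<alpha> G A k \<omega> = p * (change_count G A k \<omega> / real k) / (1 + \<alpha> k / real k - change_count G A k \<omega> / real k)"
proof -
  have kp: "real k > 0" using k by simp
  have "1 + \<alpha> k / real k - change_count G A k \<omega> / real k = (real k + \<alpha> k - change_count G A k \<omega>) / real k"
    using kp by (simp add: field_simps)
  then show ?thesis using kp by (simp add: lln_est_def)
qed

lemma pointwise_bound:
  fixes u a :: real
  assumes u: "0 \<le> u" "u \<le> 1" and a: "a > 0"
  shows "\<bar>p * u / (1 + a - u) - \<Delta>\<bar> \<le> C1 * \<bar>u - q\<bar> + C1 * q * a + (p / a + \<Delta>) * (if (1 - q) / 2 \<le> \<bar>u - q\<bar> then 1 else 0)"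
proof -
  define D where "D = 1 + a - u"
  have Da: "D \<ge> a" using u by (simp add: D_def)
  have Dp: "D > 0" using Da a by simp
  have x0: "0 \<le> p * u / D" using u p_pos Dp by simp
  have x1: "p * u / D \<le> p / a"
  proof -
    have "p * u / D \<le> p / D" using u p_pos Dp by (intro divide_right_mono) (auto intro: mult_left_le)
    also have "\<dots> \<le> p / a" using Da a p_pos by (intro divide_left_mono) auto
    finally show ?thesis .
  qed
  have nn: "0 \<le> C1 * \<bar>u - q\<bar> + C1 * q * a" using C1_pos q_bounds a by simp
  show ?thesis
  proof (cases "(1 - q) / 2 \<le> \<bar>u - q\<bar>")
    case True
    have "\<bar>p * u / D - \<Delta>\<bar> \<le> p / a + \<Delta>" using x0 x1 Delta_pos by (simp add: abs_le_iff)
    then show ?thesis using True nn by (simp add: D_def)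
  next
    case False
    have "u - q < (1 - q) / 2" using False by linarith
    then have Dc: "D \<ge> (1 - q) / 2" using a by (simp add: D_def)
    have q1: "1 - q > 0" using q_bounds by simp
    have "p * u / D - \<Delta> = p * u / D - p * q / (1 - q)" using Delta_eq by simp
    also have "\<dots> = (p * u * (1 - q) - p * q * D) / (D * (1 - q))"
      using Dp q1 by (simp add: diff_frac_eq)
    also have "p * u * (1 - q) - p * q * D = p * (u - q - q * a)"
      by (simp add: D_def algebra_simps)
    finally have "p * u / D - \<Delta> = p * (u - q - q * a) / (D * (1 - q))" .
    then have "\<bar>p * u / D - \<Delta>\<bar> = p * \<bar>u - q - q * a\<bar> / (D * (1 - q))"
      using Dp q1 p_pos by (simp add: abs_divide abs_mult)
    also have "\<dots> \<le> p * (\<bar>u - q\<bar> + q * a) / ((1 - q) / 2 * (1 - q))"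
    proof (rule frac_le)
      show "0 \<le> p * (\<bar>u - q\<bar> + q * a)" using p_pos q_bounds a by simp
      show "p * \<bar>u - q - q * a\<bar> \<le> p * (\<bar>u - q\<bar> + q * a)"
      proof -
        have "\<bar>u - q - q * a\<bar> \<le> \<bar>u - q\<bar> + \<bar>q * a\<bar>" by (rule abs_triangle_ineq4)
        also have "\<bar>q * a\<bar> = q * a" using q_bounds a by simp
        finally show ?thesis using p_pos by (intro mult_left_mono) auto
      qed
      show "0 < (1 - q) / 2 * (1 - q)" using q1 by simp
      show "(1 - q) / 2 * (1 - q) \<le> D * (1 - q)" using Dc q1 by (intro mult_right_mono) auto
    qed
    also have "\<dots> = C1 * \<bar>u - q\<bar> + C1 * q * a"
    proof -
      have nz: "(1 - q) * (1 - q) \<noteq> 0" using q1 by simp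
      have "p * (\<bar>u - q\<bar> + q * a) / ((1 - q) / 2 * (1 - q)) = (2 * p / ((1 - q) * (1 - q))) * (\<bar>u - q\<bar> + q * a)"
        using nz by (simp add: field_simps)
      then show ?thesis by (simp add: C1_def power2_eq_square algebra_simps add_divide_distrib)
    qed
    finally show ?thesis using False by (simp add: D_def)
  qed
qed

end

context model begin

lemma lln_meas[measurable]: "(\<lambda>\<omega>. lln_est p \<alpha> G A k \<omega>) \<in> borel_measurable M"
  unfolding lln_est_def by measurable

lemma expect_bound:
  assumes k: "k \<ge> 1" and a: "\<alpha> k > 0"
  shows "expectation (\<lambda>\<omega>. \<bar>lln_est p \<alpha> G A k \<omega> - \<Delta>\<bar>)
     \<le> C1 / sqrt (real k) + C1 * q * (\<alpha> k / real k) + (p / (\<alpha> k / real k) + \<Delta>) * (2 * exp (-(cexp * real k)))"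
proof -
  define a' where "a' = \<alpha> k / real k"
  have kp: "real k > 0" using k by simp
  have a': "a' > 0" using a kp by (simp add: a'_def)
  define u where "u \<omega> = change_count G A k \<omega> / real k" for \<omega>
  have u01: "0 \<le> u \<omega>" "u \<omega> \<le> 1" for \<omega>
    using cc_bounds[of k \<omega>] kp by (auto simp: u_def)
  define Bad where "Bad = {\<omega>\<in>space M. real k * ((1 - q) / 2) \<le> \<bar>change_count G A k \<omega> - real k * q\<bar>}"
  have Bads[measurable]: "Bad \<in> events" unfolding Bad_def by measurable
  have badiff: "((1 - q) / 2 \<le> \<bar>u \<omega> - q\<bar>) \<longleftrightarrow> (real k * ((1 - q) / 2) \<le> \<bar>change_count G A k \<omega> - real k * q\<bar>)" for \<omega>
  proof -
    have "u \<omega> - q = (change_count G A k \<omega> - real k * q) / real k" using kp by (simp add: u_def field_simps)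
    then have "\<bar>change_count G A k \<omega> - real k * q\<bar> = real k * \<bar>u \<omega> - q\<bar>" using kp by (simp add: abs_divide)
    then show ?thesis using mult_le_cancel_left_pos[OF kp, of "(1 - q) / 2" "\<bar>u \<omega> - q\<bar>"] by simp
  qed
  have lln_u: "lln_est p \<alpha> G A k \<omega> = p * u \<omega> / (1 + a' - u \<omega>)" for \<omega>
    using lln_alt[OF k] by (simp add: u_def a'_def)
  have pw: "\<bar>lln_est p \<alpha> G A k \<omega> - \<Delta>\<bar> \<le> C1 * \<bar>u \<omega> - q\<bar> + C1 * q * a' + (p / a' + \<Delta>) * indicator Bad \<omega>"
    if "\<omega> \<in> space M" for \<omega>
  proof -
    have ind: "(if (1 - q) / 2 \<le> \<bar>u \<omega> - q\<bar> then 1 else 0) = (indicator Bad \<omega> :: real)"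
      using badiff[of \<omega>] that by (auto simp: Bad_def indicator_def)
    have "\<bar>p * u \<omega> / (1 + a' - u \<omega>) - \<Delta>\<bar> \<le> C1 * \<bar>u \<omega> - q\<bar> + C1 * q * a' + (p / a' + \<Delta>) * (if (1 - q) / 2 \<le> \<bar>u \<omega> - q\<bar> then 1 else 0)"
      by (rule pointwise_bound[OF u01 a'])
    then show ?thesis unfolding lln_u ind .
  qed
  have lln_b: "\<bar>lln_est p \<alpha> G A k \<omega> - \<Delta>\<bar> \<le> p / a' + \<Delta>" for \<omega>
  proof -
    have "\<bar>p * u \<omega> / (1 + a' - u \<omega>) - \<Delta>\<bar> \<le> p / a' + \<Delta>"
    proof -
      have D: "1 + a' - u \<omega> \<ge> a'" using u01[of \<omega>] by simp
      have x0: "0 \<le> p * u \<omega> / (1 + a' - u \<omega>)" using u01[of \<omega>] p_pos D a' by simp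
      have "p * u \<omega> / (1 + a' - u \<omega>) \<le> p / (1 + a' - u \<omega>)"
        using u01[of \<omega>] p_pos D a' by (intro divide_right_mono) (auto intro: mult_left_le)
      also have "\<dots> \<le> p / a'" using D a' p_pos by (intro divide_left_mono) auto
      finally show ?thesis using x0 Delta_pos by (simp add: abs_le_iff)
    qed
    then show ?thesis unfolding lln_u .
  qed
  have um[measurable]: "u \<in> borel_measurable M" unfolding u_def[abs_def] by measurable
  have int_l: "integrable M (\<lambda>\<omega>. \<bar>lln_est p \<alpha> G A k \<omega> - \<Delta>\<bar>)"
    by (rule integrable_const_bound[where B="p / a' + \<Delta>"]) (auto simp: lln_b)
  have int_u: "integrable M (\<lambda>\<omega>. \<bar>u \<omega> - q\<bar>)"
  proof (rule integrable_const_bound[where B=1])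
    have "norm \<bar>u x - q\<bar> \<le> 1" for x using u01[of x] q_bounds by (auto simp: abs_le_iff)
    then show "AE x in M. norm \<bar>u x - q\<bar> \<le> 1" by simp
  qed simp
  have int_B: "integrable M (indicator Bad :: 'a \<Rightarrow> real)"
    by (rule integrable_real_indicator) (auto simp: less_top[symmetric])
  have "expectation (\<lambda>\<omega>. \<bar>lln_est p \<alpha> G A k \<omega> - \<Delta>\<bar>)
      \<le> expectation (\<lambda>\<omega>. C1 * \<bar>u \<omega> - q\<bar> + C1 * q * a' + (p / a' + \<Delta>) * indicator Bad \<omega>)"
    by (rule integral_mono[OF int_l]) (use int_u int_B pw in auto)
  also have "\<dots> = C1 * expectation (\<lambda>\<omega>. \<bar>u \<omega> - q\<bar>) + C1 * q * a' + (p / a' + \<Delta>) * prob Bad"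
    using int_u int_B by (simp add: prob_space)
  also have "\<dots> \<le> C1 * (1 / sqrt (real k)) + C1 * q * a' + (p / a' + \<Delta>) * (2 * exp (-(cexp * real k)))"
  proof (intro add_mono mult_left_mono order.refl)
    show "expectation (\<lambda>\<omega>. \<bar>u \<omega> - q\<bar>) \<le> 1 / sqrt (real k)"
      using abs_dev_bound[OF k] by (simp add: u_def)
    show "0 \<le> C1" using C1_pos by simp
    show "0 \<le> C1 * q" using C1_pos q_bounds by simp
    show "0 \<le> p / a' + \<Delta>" using p_pos a' Delta_pos by simp
    have "prob Bad \<le> 2 * exp (-2 * (real k * ((1 - q) / 2))\<^sup>2 / real k)"
      unfolding Bad_def by (rule hoeffding_cc[OF k]) (use q_bounds in simp)
    also have "-2 * (real k * ((1 - q) / 2))\<^sup>2 / real k = -(cexp * real k)"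
      using kp by (simp add: cexp_def power2_eq_square field_simps)
    finally show "prob Bad \<le> 2 * exp (-(cexp * real k))" .
  qed
  finally show ?thesis by (simp add: a'_def)
qed

end

context model begin

lemma exp_sqrt_bound:
  fixes c :: real and k :: nat
  assumes c: "c > 0" and k: "k \<ge> 1"
  shows "exp (-(c * real k / 2)) \<le> (1 / min 1 (c / 2)) / sqrt (real k)"
proof -
  define m where "m = min 1 (c / 2)"
  have m: "m > 0" "m \<le> 1" "m \<le> c / 2" using c by (auto simp: m_def)
  have sk: "sqrt (real k) \<le> real k"
  proof -
    have s1: "1 \<le> sqrt (real k)" using k by simp
    have "sqrt (real k) * 1 \<le> sqrt (real k) * sqrt (real k)" using s1 by (intro mult_left_mono) auto
    then show ?thesis by simp
  qed
  have sp: "sqrt (real k) > 0" using k by simp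
  have "m * sqrt (real k) \<le> m * (1 + real k)" using sk m by (intro mult_left_mono) auto
  also have "\<dots> \<le> 1 + c * real k / 2"
  proof -
    have "m * real k \<le> c / 2 * real k" using m by (intro mult_right_mono) auto
    then show ?thesis using m by (simp add: algebra_simps)
  qed
  also have "\<dots> \<le> exp (c * real k / 2)" by (rule exp_ge_add_one_self_aux) (use c in simp)
  finally have e: "m * sqrt (real k) \<le> exp (c * real k / 2)" .
  have "exp (-(c * real k / 2)) = 1 / exp (c * real k / 2)" by (simp add: exp_minus field_simps)
  also have "\<dots> \<le> 1 / (m * sqrt (real k))" using e m sp by (intro divide_left_mono) auto
  also have "\<dots> = (1 / m) / sqrt (real k)" by simp
  finally show ?thesis by (simp add: m_def)
qed

lemma part2:
  assumes a0: "\<And>k. k \<ge> 1 \<Longrightarrow> \<alpha> k > 0"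
    and L: "(\<lambda>k. ln (real k / \<alpha> k) / real k) \<longlonglongrightarrow> 0"
  shows "(\<lambda>k. expectation (\<lambda>\<omega>. \<bar>lln_est p \<alpha> G A k \<omega> - \<Delta>\<bar>)) \<in> O(\<lambda>k. max (1 / sqrt (real k)) (\<alpha> k / real k))"
proof -
  define c where "c = cexp"
  have c: "c > 0" using cexp_pos by (simp add: c_def)
  define K where "K = 1 / min 1 (c / 2)"
  define CC where "CC = C1 + C1 * q + 2 * (p + \<Delta>) * K"
  have ev: "eventually (\<lambda>k. ln (real k / \<alpha> k) / real k < c / 2) sequentially"
    using order_tendstoD(2)[OF L, of "c/2"] c by simp
  show ?thesis
  proof (rule bigoI[where c=CC])
    show "eventually (\<lambda>k. norm (expectation (\<lambda>\<omega>. \<bar>lln_est p \<alpha> G A k \<omega> - \<Delta>\<bar>))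
       \<le> CC * norm (max (1 / sqrt (real k)) (\<alpha> k / real k))) sequentially"
      using ev eventually_ge_at_top[of 1]
    proof eventually_elim
      case (elim k)
      have k: "k \<ge> 1" by fact
      have kp: "real k > 0" using k by simp
      have ak: "\<alpha> k > 0" using a0[OF k] .
      define a where "a = \<alpha> k / real k"
      have a: "a > 0" using ak kp by (simp add: a_def)
      define s where "s = 1 / sqrt (real k)"
      have s: "s > 0" using kp by (simp add: s_def)
      define mx where "mx = max s a"
      have mx: "s \<le> mx" "a \<le> mx" "mx > 0" using s by (auto simp: mx_def)
      have E0: "0 \<le> expectation (\<lambda>\<omega>. \<bar>lln_est p \<alpha> G A k \<omega> - \<Delta>\<bar>)" by simp
      have lnb: "ln (real k / \<alpha> k) \<le> c / 2 * real k"
        using elim(1) kp by (simp add: field_simps)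
      have kab: "real k / \<alpha> k \<le> exp (c / 2 * real k)"
      proof -
        have "real k / \<alpha> k = exp (ln (real k / \<alpha> k))" using kp ak by simp
        also have "\<dots> \<le> exp (c / 2 * real k)" using lnb by simp
        finally show ?thesis .
      qed
      have T: "(p / a + \<Delta>) * (2 * exp (-(cexp * real k))) \<le> 2 * (p + \<Delta>) * K * s"
      proof -
        have pa: "p / a = p * (real k / \<alpha> k)" by (simp add: a_def)
        have "(p / a + \<Delta>) * (2 * exp (-(c * real k))) \<le> (p * exp (c / 2 * real k) + \<Delta>) * (2 * exp (-(c * real k)))"
          unfolding pa using kab p_pos by (intro mult_right_mono add_mono mult_left_mono) auto
        also have "\<dots> = 2 * p * exp (-(c * real k / 2)) + 2 * \<Delta> * exp (-(c * real k))"
          by (simp add: algebra_simps exp_add[symmetric])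
        also have "\<dots> \<le> 2 * p * exp (-(c * real k / 2)) + 2 * \<Delta> * exp (-(c * real k / 2))"
          using Delta_pos p_pos c kp by (intro add_mono mult_left_mono) auto
        also have "\<dots> = 2 * (p + \<Delta>) * exp (-(c * real k / 2))" by (simp add: algebra_simps)
        also have "\<dots> \<le> 2 * (p + \<Delta>) * (K * s)"
          using exp_sqrt_bound[OF c k] p_pos Delta_pos by (intro mult_left_mono) (auto simp: K_def s_def)
        finally show ?thesis by (simp add: c_def mult.assoc)
      qed
      have "expectation (\<lambda>\<omega>. \<bar>lln_est p \<alpha> G A k \<omega> - \<Delta>\<bar>) \<le> C1 * s + C1 * q * a + 2 * (p + \<Delta>) * K * s"
        using expect_bound[of k \<alpha>, OF k ak] T by (simp add: a_def s_def)
      also have "\<dots> \<le> C1 * mx + C1 * q * mx + 2 * (p + \<Delta>) * K * mx"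
      proof -
        have K0: "K \<ge> 0" using c by (simp add: K_def)
        show ?thesis using mx C1_pos q_bounds K0 p_pos Delta_pos
          by (intro add_mono mult_left_mono) auto
      qed
      also have "\<dots> = CC * mx" by (simp add: CC_def algebra_simps)
      finally show ?case using E0 mx by (simp add: mx_def s_def a_def)
    qed
  qed
qed

end

theorem theorem1:
  fixes M :: "'a measure" and \<Delta> p :: real and \<alpha> :: "nat \<Rightarrow> real"
    and G A :: "nat \<Rightarrow> 'a \<Rightarrow> real"
  assumes "prob_space M"
    and "\<Delta> > 0" and "p > 0"
    and "\<And>n. distributed M lborel (G n) (exponential_density \<Delta>)"
    and "\<And>n. distributed M lborel (A n) (exponential_density p)"
    and "prob_space.indep_vars M (\<lambda>_. borel) (\<lambda>i. case i of Inl n \<Rightarrow> G n | Inr n \<Rightarrow> A n) UNIV"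
    and "\<And>k. k \<ge> 1 \<Longrightarrow> \<alpha> k > 0"
  shows "((\<lambda>k. \<alpha> k / real k) \<longlonglongrightarrow> 0 \<longrightarrow>
           (AE \<omega> in M. (\<lambda>k. lln_est p \<alpha> G A k \<omega>) \<longlonglongrightarrow> \<Delta>))
       \<and> ((\<lambda>k. \<alpha> k / real k) \<longlonglongrightarrow> 0 \<and> (\<lambda>k. ln (real k / \<alpha> k) / real k) \<longlonglongrightarrow> 0 \<longrightarrow>
           (\<lambda>k. prob_space.expectation M (\<lambda>\<omega>. \<bar>lln_est p \<alpha> G A k \<omega> - \<Delta>\<bar>))
             \<in> O(\<lambda>k. max (1 / sqrt (real k)) (\<alpha> k / real k)))"
  proof -
  interpret model M \<Delta> p G A
    using assms by (simp add: model_def model_axioms_def)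
  show ?thesis using part1 part2 assms(7) by blast
qed

end
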